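(* Let $T$ be a split Leibniz triple system with symmetric root system $\Lambda^1$, and suppose $\Lambda^0$ is symmetric. If $\mathrm{Ann}(T)=0$ and $\{T,T,T\}=T$, then $$T=\bigoplus_{[\alpha]\in\Lambda^1/\sim}I_{[\alpha]},$$ where $I_{[\alpha]}=T_{0,\Lambda^1_\alpha}\oplus V_{\Lambda^1_\alpha}$ are ideals of $T$.
   Context: A Leibniz triple system is a vector space $T$ over a field $\mathbb{K}$ with a trilinear product $\{\cdot,\cdot,\cdot\}$ satisfying, for all $a,b,c,d,e\in T$: $\{a,\{b,c,d\},e\}=\{\{a,b,c\},d,e\}-\{\{a,c,b\},d,e\}-\{\{a,d,b\},c,e\}+\{\{a,d,c\},b,e\}$ and $\{a,b,\{c,d,e\}\}=\{\{a,b,c\},d,e\}-\{\{a,b,d\},c,e\}-\{\{a,b,e\},c,d\}+\{\{a,b,e\},d,c\}$. The annihilator is $\mathrm{Ann}(T)=\{x\in T:\{x,T,T\}+\{T,x,T\}+\{T,T,x\}=0\}$. Its standard embedding is the right Leibniz algebra $L=L^0\oplus L^1$ ($L^0$ the span of symbols $x\otimes y$, $L^1=T$) with product $[(x\otimes y,z),(u\otimes v,w)]=(\{x,y,u\}\otimes v-\{x,y,v\}\otimes u+z\otimes w,\ \{x,y,w\}+\{z,u,v\}-\{z,v,u\})$; so $[x,y]=x\otimes y$ and $\{x,y,z\}=[[x,y],z]$ for $x,y,z\in T$. Let $H^0$ be a maximal abelian subalgebra of $L^0$; for $\alpha\in(H^0)^*$ put $T_\alpha=\{t\in T:[t,h]=\alpha(h)t\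 \forall h\in H^0\}$, $L^0_\alpha=\{v\in L^0:[v,h]=\alpha(h)v\ \forall h\in H^0\}$, $\Lambda^1=\{\alpha\neq0:T_\alpha\neq0\}$, $\Lambda^0=\{\alpha\neq0:L^0_\alpha\neq0\}$. $T$ is split (w.r.t. $H^0$) if $T=T_0\oplus\bigoplus_{\alpha\in\Lambda^1}T_\alpha$, $\{T_0,T_0,T_0\}=0$ and $\{T_\alpha,T_{-\alpha},T_0\}=0$ for all $\alpha\in\Lambda^1$. A set $\Lambda\subset(H^0)^*$ is symmetric if $\alpha\in\Lambda$ implies $-\alpha\in\Lambda$. Two roots $\alpha,\beta\in\Lambda^1$ are connected if there is a family $\alpha_1,\dots,\alpha_{2n+1}\in\Lambda^1\cup\{0\}$ with: $\alpha_1+\dots+\alpha_{2k+1}\in\Lambda^1$ for $k=0,\dots,n$; $\alpha_1+\dots+\alpha_{2k}\in\Lambda^0$ for $k=1,\dots,n$; $\alpha_1=\alpha$ and $\alpha_1+\dots+\alpha_{2n+1}\in\{\beta,-\beta\}$. $\Lambda^1_\alpha$ is the set of $\beta\in\Lambda^1$ connected with $\alpha$; $\alpha\sim\beta$ iff $\beta\in\Lambda^1_\alpha$, and $[\alpha]$ is the class of $\alpha$. For $\alpha\in\Lambda^1$: $T_{0,\Lambda^1_\alpha}=\mathrm{span}_{\mathbb{K}}\{\{T_{\beta_1},T_{\beta_2},T_{\beta_3}\}:\beta_1+\beta_2+\beta_3=0,\ \beta_i\in\Lambda^1_\alpha\cup\{0\}\}$ and $V_{\Lambda^1_\alpha}=\bigoplus_{\gamma\in\Lambda^1_\alpha}T_\gamma$.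 *)

theory Defs
  imports Main "HOL.Vector_Spaces" "HOL-Library.Function_Algebras"
begin

definition LTS :: "('k::field \<Rightarrow> 'v::ab_group_add \<Rightarrow> 'v) \<Rightarrow> ('v \<Rightarrow> 'v \<Rightarrow> 'v \<Rightarrow> 'v) \<Rightarrow> bool" where
  "LTS sc tp \<longleftrightarrow> vector_space sc
     \<and> (\<forall>b c. Vector_Spaces.linear sc sc (\<lambda>a. tp a b c))
     \<and> (\<forall>a c. Vector_Spaces.linear sc sc (\<lambda>b. tp a b c))
     \<and> (\<forall>a b. Vector_Spaces.linear sc sc (\<lambda>c. tp a b c))
     \<and> (\<forall>a b c d e. tp a (tp b c d) e =
           tp (tp a b c) d e - tp (tp a c b) d e - tp (tp a d b) c e + tp (tp a d c) b e)
     \<and> (\<forall>a b c d e. tp a b (tp c d e) =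
           tp (tp a b c) d e - tp (tp a b d) c e - tp (tp a b e) c d + tp (tp a b e) d c)"

definition Ann :: "('v::ab_group_add \<Rightarrow> 'v \<Rightarrow> 'v \<Rightarrow> 'v) \<Rightarrow> 'v set" where
  "Ann tp = {x. \<forall>a b. tp x a b = 0 \<and> tp a x b = 0 \<and> tp a b x = 0}"

definition is_ideal :: "('k::field \<Rightarrow> 'v::ab_group_add \<Rightarrow> 'v) \<Rightarrow> ('v \<Rightarrow> 'v \<Rightarrow> 'v \<Rightarrow> 'v) \<Rightarrow> 'v set \<Rightarrow> bool" where
  "is_ideal sc tp I \<longleftrightarrow> module.subspace sc I
     \<and> (\<forall>x\<in>I. \<forall>a b. tp x a b \<in> I \<and> tp a x b \<in> I \<and> tp a b x \<in> I)"

definition is_direct_sum :: "('k::field \<Rightarrow> 'v::ab_group_add \<Rightarrow> 'v) \<Rightarrow> 'i set \<Rightarrow> ('i \<Rightarrow> 'v set) \<Rightarrow> 'v set \<Rightarrow> bool" where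
  "is_direct_sum sc I V U \<longleftrightarrow>
     (\<forall>i\<in>I. module.subspace sc (V i))
     \<and> (\<forall>x. x \<in> U \<longleftrightarrow> (\<exists>F f. finite F \<and> F \<subseteq> I \<and> (\<forall>i\<in>F. f i \<in> V i) \<and> x = (\<Sum>i\<in>F. f i)))
     \<and> (\<forall>F f. finite F \<longrightarrow> F \<subseteq> I \<longrightarrow> (\<forall>i\<in>F. f i \<in> V i) \<longrightarrow> (\<Sum>i\<in>F. f i) = 0
            \<longrightarrow> (\<forall>i\<in>F. f i = 0))"

text \<open>An element of L^0 is represented by a formal finite sum of symbols x\<otimes>y,
i.e. a list of pairs (x,y).  Scalars are absorbed into the first tensor factor.
Two formal sums are identified in L^0 iff they act identically on T = L^1 from the
left (z \<mapsto> [v,z]) and from the right (z \<mapsto> [z,v]) in the standard embedding.\<close>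

type_synonym 'v L0 = "('v \<times> 'v) list"

definition Lop :: "('v::ab_group_add \<Rightarrow> 'v \<Rightarrow> 'v \<Rightarrow> 'v) \<Rightarrow> 'v L0 \<Rightarrow> 'v \<Rightarrow> 'v" where
  "Lop tp v z = (\<Sum>(x,y)\<leftarrow>v. tp x y z)"

definition Rop :: "('v::ab_group_add \<Rightarrow> 'v \<Rightarrow> 'v \<Rightarrow> 'v) \<Rightarrow> 'v L0 \<Rightarrow> 'v \<Rightarrow> 'v" where
  "Rop tp v z = (\<Sum>(x,y)\<leftarrow>v. tp z x y - tp z y x)"

definition eqL :: "('v::ab_group_add \<Rightarrow> 'v \<Rightarrow> 'v \<Rightarrow> 'v) \<Rightarrow> 'v L0 \<Rightarrow> 'v L0 \<Rightarrow> bool" where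
  "eqL tp v w \<longleftrightarrow> Lop tp v = Lop tp w \<and> Rop tp v = Rop tp w"

definition smulL :: "('k \<Rightarrow> 'v \<Rightarrow> 'v) \<Rightarrow> 'k \<Rightarrow> 'v L0 \<Rightarrow> 'v L0" where
  "smulL sc c v = map (\<lambda>(x,y). (sc c x, y)) v"

text \<open>[x\<otimes>y, u\<otimes>w] = {x,y,u}\<otimes>w - {x,y,w}\<otimes>u, extended bilinearly.\<close>
definition brL :: "('k::field \<Rightarrow> 'v::ab_group_add \<Rightarrow> 'v) \<Rightarrow> ('v \<Rightarrow> 'v \<Rightarrow> 'v \<Rightarrow> 'v) \<Rightarrow> 'v L0 \<Rightarrow> 'v L0 \<Rightarrow> 'v L0" where
  "brL sc tp v w = concat (map (\<lambda>(x,y). concat (map (\<lambda>(u,w'). [(tp x y u, w'), (sc (-1) (tp x y w'), u)]) w)) v)"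

text \<open>H is a subalgebra of L^0 (a set of representatives saturated under eqL).\<close>
definition subalgL :: "('k::field \<Rightarrow> 'v::ab_group_add \<Rightarrow> 'v) \<Rightarrow> ('v \<Rightarrow> 'v \<Rightarrow> 'v \<Rightarrow> 'v) \<Rightarrow> 'v L0 set \<Rightarrow> bool" where
  "subalgL sc tp H \<longleftrightarrow> [] \<in> H
     \<and> (\<forall>v\<in>H. \<forall>w\<in>H. v @ w \<in> H)
     \<and> (\<forall>c. \<forall>v\<in>H. smulL sc c v \<in> H)
     \<and> (\<forall>v\<in>H. \<forall>w. eqL tp v w \<longrightarrow> w \<in> H)
     \<and> (\<forall>v\<in>H. \<forall>w\<in>H. brL sc tp v w \<in> H)"

definition abelianL :: "('k::field \<Rightarrow> 'v::ab_group_add \<Rightarrow> 'v) \<Rightarrow> ('v \<Rightarrow> 'v \<Rightarrow> 'v \<Rightarrow> 'v) \<Rightarrow> 'v L0 set \<Rightarrow> bool" where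
  "abelianL sc tp H \<longleftrightarrow> subalgL sc tp H \<and> (\<forall>v\<in>H. \<forall>w\<in>H. eqL tp (brL sc tp v w) [])"

definition max_abelianL :: "('k::field \<Rightarrow> 'v::ab_group_add \<Rightarrow> 'v) \<Rightarrow> ('v \<Rightarrow> 'v \<Rightarrow> 'v \<Rightarrow> 'v) \<Rightarrow> 'v L0 set \<Rightarrow> bool" where
  "max_abelianL sc tp H \<longleftrightarrow> abelianL sc tp H \<and> (\<forall>H'. abelianL sc tp H' \<longrightarrow> H \<subseteq> H' \<longrightarrow> H' = H)"

text \<open>Elements of (H^0)^*: linear functionals on H (well defined on L^0), normalised
to vanish outside H so that equality of functionals is equality of functions.\<close>
definition dualH :: "('k::field \<Rightarrow> 'v::ab_group_add \<Rightarrow> 'v) \<Rightarrow> ('v \<Rightarrow> 'v \<Rightarrow> 'v \<Rightarrow> 'v) \<Rightarrow> 'v L0 set \<Rightarrow> ('v L0 \<Rightarrow> 'k) \<Rightarrow> bool" where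
  "dualH sc tp H \<alpha> \<longleftrightarrow> (\<forall>v. v \<notin> H \<longrightarrow> \<alpha> v = 0)
     \<and> (\<forall>v\<in>H. \<forall>w\<in>H. \<alpha> (v @ w) = \<alpha> v + \<alpha> w)
     \<and> (\<forall>c. \<forall>v\<in>H. \<alpha> (smulL sc c v) = c * \<alpha> v)
     \<and> (\<forall>v\<in>H. \<forall>w. eqL tp v w \<longrightarrow> \<alpha> v = \<alpha> w)"

text \<open>T_\<alpha> = {t. [t,h] = \<alpha>(h) t for all h \<in> H}; note [t, x\<otimes>y] = {t,x,y} - {t,y,x}.\<close>
definition Troot :: "('k::field \<Rightarrow> 'v::ab_group_add \<Rightarrow> 'v) \<Rightarrow> ('v \<Rightarrow> 'v \<Rightarrow> 'v \<Rightarrow> 'v) \<Rightarrow> 'v L0 set \<Rightarrow> ('v L0 \<Rightarrow> 'k) \<Rightarrow> 'v set" where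
  "Troot sc tp H \<alpha> = {t. \<forall>h\<in>H. Rop tp h t = sc (\<alpha> h) t}"

definition L0root :: "('k::field \<Rightarrow> 'v::ab_group_add \<Rightarrow> 'v) \<Rightarrow> ('v \<Rightarrow> 'v \<Rightarrow> 'v \<Rightarrow> 'v) \<Rightarrow> 'v L0 set \<Rightarrow> ('v L0 \<Rightarrow> 'k) \<Rightarrow> 'v L0 set" where
  "L0root sc tp H \<alpha> = {v. \<forall>h\<in>H. eqL tp (brL sc tp v h) (smulL sc (\<alpha> h) v)}"

definition Lambda1 :: "('k::field \<Rightarrow> 'v::ab_group_add \<Rightarrow> 'v) \<Rightarrow> ('v \<Rightarrow> 'v \<Rightarrow> 'v \<Rightarrow> 'v) \<Rightarrow> 'v L0 set \<Rightarrow> ('v L0 \<Rightarrow> 'k) set" where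
  "Lambda1 sc tp H = {\<alpha>. dualH sc tp H \<alpha> \<and> \<alpha> \<noteq> 0 \<and> Troot sc tp H \<alpha> \<noteq> {0}}"

definition Lambda0 :: "('k::field \<Rightarrow> 'v::ab_group_add \<Rightarrow> 'v) \<Rightarrow> ('v \<Rightarrow> 'v \<Rightarrow> 'v \<Rightarrow> 'v) \<Rightarrow> 'v L0 set \<Rightarrow> ('v L0 \<Rightarrow> 'k) set" where
  "Lambda0 sc tp H = {\<alpha>. dualH sc tp H \<alpha> \<and> \<alpha> \<noteq> 0 \<and> (\<exists>v\<in>L0root sc tp H \<alpha>. \<not> eqL tp v [])}"

definition symmetric_set :: "('a::uminus) set \<Rightarrow> bool" where
  "symmetric_set \<Lambda> \<longleftrightarrow> (\<forall>\<alpha>\<in>\<Lambda>. - \<alpha> \<in> \<Lambda>)"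

definition split_LTS :: "('k::field \<Rightarrow> 'v::ab_group_add \<Rightarrow> 'v) \<Rightarrow> ('v \<Rightarrow> 'v \<Rightarrow> 'v \<Rightarrow> 'v) \<Rightarrow> 'v L0 set \<Rightarrow> bool" where
  "split_LTS sc tp H \<longleftrightarrow>
     is_direct_sum sc (insert 0 (Lambda1 sc tp H)) (Troot sc tp H) UNIV
     \<and> (\<forall>x\<in>Troot sc tp H 0. \<forall>y\<in>Troot sc tp H 0. \<forall>z\<in>Troot sc tp H 0. tp x y z = 0)
     \<and> (\<forall>\<alpha>\<in>Lambda1 sc tp H. \<forall>x\<in>Troot sc tp H \<alpha>. \<forall>y\<in>Troot sc tp H (- \<alpha>).
          \<forall>z\<in>Troot sc tp H 0. tp x y z = 0)"

definition connected_roots :: "('k::field \<Rightarrow> 'v::ab_group_add \<Rightarrow> 'v) \<Rightarrow> ('v \<Rightarrow> 'v \<Rightarrow> 'v \<Rightarrow> 'v) \<Rightarrow> 'v L0 set \<Rightarrow> ('v L0 \<Rightarrow> 'k) \<Rightarrow> ('v L0 \<Rightarrow> 'k) \<Rightarrow> bool" where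
  "connected_roots sc tp H \<alpha> \<beta> \<longleftrightarrow> (\<exists>(n::nat) (a :: nat \<Rightarrow> 'v L0 \<Rightarrow> 'k).
      (\<forall>i\<in>{1..2*n+1}. a i \<in> insert 0 (Lambda1 sc tp H))
      \<and> (\<forall>k\<in>{0..n}. (\<Sum>i=1..2*k+1. a i) \<in> Lambda1 sc tp H)
      \<and> (\<forall>k\<in>{1..n}. (\<Sum>i=1..2*k. a i) \<in> Lambda0 sc tp H)
      \<and> a 1 = \<alpha>
      \<and> (\<Sum>i=1..2*n+1. a i) \<in> {\<beta>, - \<beta>})"

definition conn_class :: "('k::field \<Rightarrow> 'v::ab_group_add \<Rightarrow> 'v) \<Rightarrow> ('v \<Rightarrow> 'v \<Rightarrow> 'v \<Rightarrow> 'v) \<Rightarrow> 'v L0 set \<Rightarrow> ('v L0 \<Rightarrow> 'k) \<Rightarrow> ('v L0 \<Rightarrow> 'k) set" where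
  "conn_class sc tp H \<alpha> = {\<beta>\<in>Lambda1 sc tp H. connected_roots sc tp H \<alpha> \<beta>}"

definition T0part :: "('k::field \<Rightarrow> 'v::ab_group_add \<Rightarrow> 'v) \<Rightarrow> ('v \<Rightarrow> 'v \<Rightarrow> 'v \<Rightarrow> 'v) \<Rightarrow> 'v L0 set \<Rightarrow> ('v L0 \<Rightarrow> 'k) set \<Rightarrow> 'v set" where
  "T0part sc tp H \<Lambda> = module.span sc
     {tp x y z | x y z \<beta>1 \<beta>2 \<beta>3. \<beta>1 \<in> insert 0 \<Lambda> \<and> \<beta>2 \<in> insert 0 \<Lambda> \<and> \<beta>3 \<in> insert 0 \<Lambda>
        \<and> \<beta>1 + \<beta>2 + \<beta>3 = 0
        \<and> x \<in> Troot sc tp H \<beta>1 \<and> y \<in> Troot sc tp H \<beta>2 \<and> z \<in> Troot sc tp H \<beta>3}"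

definition Vpart :: "('k::field \<Rightarrow> 'v::ab_group_add \<Rightarrow> 'v) \<Rightarrow> ('v \<Rightarrow> 'v \<Rightarrow> 'v \<Rightarrow> 'v) \<Rightarrow> 'v L0 set \<Rightarrow> ('v L0 \<Rightarrow> 'k) set \<Rightarrow> 'v set" where
  "Vpart sc tp H \<Lambda> = module.span sc (\<Union>\<gamma>\<in>\<Lambda>. Troot sc tp H \<gamma>)"

definition Ipart :: "('k::field \<Rightarrow> 'v::ab_group_add \<Rightarrow> 'v) \<Rightarrow> ('v \<Rightarrow> 'v \<Rightarrow> 'v \<Rightarrow> 'v) \<Rightarrow> 'v L0 set \<Rightarrow> ('v L0 \<Rightarrow> 'k) set \<Rightarrow> 'v set" where
  "Ipart sc tp H \<Lambda> = {x + y | x y. x \<in> T0part sc tp H \<Lambda> \<and> y \<in> Vpart sc tp H \<Lambda>}"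

end

theory Submission
  imports Defs
begin

locale LT =
  fixes sc :: "'k::field \<Rightarrow> 'v::ab_group_add \<Rightarrow> 'v"
    and tp :: "'v \<Rightarrow> 'v \<Rightarrow> 'v \<Rightarrow> 'v"
  assumes lts: "LTS sc tp"
begin

lemma vs: "vector_space sc" using lts by (simp add: LTS_def)
sublocale vs: vector_space sc by (rule vs)

lemma mh1: "module_hom sc sc (\<lambda>a. tp a b c)" using lts by (simp add: LTS_def linear_iff_module_hom)
lemma mh2: "module_hom sc sc (\<lambda>b. tp a b c)" using lts by (simp add: LTS_def linear_iff_module_hom)
lemma mh3: "module_hom sc sc (\<lambda>c. tp a b c)" using lts by (simp add: LTS_def linear_iff_module_hom)

lemma ax1: "tp a (tp b c d) e =
           tp (tp a b c) d e - tp (tp a c b) d e - tp (tp a d b) c e + tp (tp a d c) b e"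
  using lts by (simp add: LTS_def)
lemma ax2: "tp a b (tp c d e) =
           tp (tp a b c) d e - tp (tp a b d) c e - tp (tp a b e) c d + tp (tp a b e) d c"
  using lts by (simp add: LTS_def)

lemma lin [simp]:
  "tp (a + a') b c = tp a b c + tp a' b c"
  "tp a (b + b') c = tp a b c + tp a b' c"
  "tp a b (c + c') = tp a b c + tp a b c'"
  "tp (a - a') b c = tp a b c - tp a' b c"
  "tp a (b - b') c = tp a b c - tp a b' c"
  "tp a b (c - c') = tp a b c - tp a b c'"
  "tp (- a) b c = - tp a b c"
  "tp a (- b) c = - tp a b c"
  "tp a b (- c) = - tp a b c"
  "tp 0 b c = 0" "tp a 0 c = 0" "tp a b 0 = 0"
  "tp (sc k a) b c = sc k (tp a b c)"
  "tp a (sc k b) c = sc k (tp a b c)"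
  "tp a b (sc k c) = sc k (tp a b c)"
  using module_hom.add[OF mh1] module_hom.add[OF mh2] module_hom.add[OF mh3]
    module_hom.diff[OF mh1] module_hom.diff[OF mh2] module_hom.diff[OF mh3]
    module_hom.neg[OF mh1] module_hom.neg[OF mh2] module_hom.neg[OF mh3]
    module_hom.zero[OF mh1] module_hom.zero[OF mh2] module_hom.zero[OF mh3]
    module_hom.scale[OF mh1] module_hom.scale[OF mh2] module_hom.scale[OF mh3]
  by auto

lemma D: "tp (tp a b c) d e - tp (tp a b c) e d = tp (tp a d e - tp a e d) b c + tp a (tp b d e - tp b e d) c + tp a b (tp c d e - tp c e d)"
  by (simp add: ax1 ax2 algebra_simps)

lemma B: "tp x y (tp u w z + (tp z u w - tp z w u)) = 0"
  by (simp add: ax1 ax2 algebra_simps)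

lemma A: "tp (tp x y u) w z - tp (tp x y w) u z = tp x y (tp u w z) + (tp (tp x y z) u w - tp (tp x y z) w u)"
  by (simp add: ax1 ax2 algebra_simps)

lemma E: "(tp z (tp x y u) w - tp z w (tp x y u)) + (tp z (- (tp x y w)) u - tp z u (- (tp x y w)))
  = (tp (tp z x y - tp z y x) u w - tp (tp z x y - tp z y x) w u) - (tp (tp z u w - tp z w u) x y - tp (tp z u w - tp z w u) y x)"
  by (simp add: ax1 ax2 algebra_simps)


lemma sc_m1[simp]: "sc (-1) t = - t" by simp

lemma Rop_Nil[simp]: "Rop tp [] t = 0" by (simp add: Rop_def)
lemma Rop_Cons[simp]: "Rop tp ((u,w)#h) t = (tp t u w - tp t w u) + Rop tp h t" by (simp add: Rop_def)
lemma Rop_app[simp]: "Rop tp (h @ h') t = Rop tp h t + Rop tp h' t" by (simp add: Rop_def)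
lemma Lop_Nil[simp]: "Lop tp [] t = 0" by (simp add: Lop_def)
lemma Lop_Cons[simp]: "Lop tp ((u,w)#h) t = tp u w t + Lop tp h t" by (simp add: Lop_def)
lemma Lop_app[simp]: "Lop tp (h @ h') t = Lop tp h t + Lop tp h' t" by (simp add: Lop_def)

lemma Rop_lin[simp]:
  "Rop tp h (a + b) = Rop tp h a + Rop tp h b"
  "Rop tp h (a - b) = Rop tp h a - Rop tp h b"
  "Rop tp h (- a) = - Rop tp h a"
  "Rop tp h 0 = 0"
  "Rop tp h (sc k a) = sc k (Rop tp h a)"
  by (induction h) (auto simp: algebra_simps vs.scale_right_diff_distrib)

lemma Lop_lin[simp]:
  "Lop tp h (a + b) = Lop tp h a + Lop tp h b"
  "Lop tp h (a - b) = Lop tp h a - Lop tp h b"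
  "Lop tp h 0 = 0"
  by (induction h) (auto simp: algebra_simps)

lemma deriv: "Rop tp h (tp x y z) = tp (Rop tp h x) y z + tp x (Rop tp h y) z + tp x y (Rop tp h z)"
proof (induction h)
  case Nil then show ?case by simp
next
  case (Cons p h)
  obtain u w where p: "p = (u,w)" by (cases p)
  show ?case using Cons by (simp add: p ax1 ax2 algebra_simps)
qed

lemma brL_single_Cons: "brL sc tp [(x,y)] ((u,w)#h) = [(tp x y u, w), (sc (-1) (tp x y w), u)] @ brL sc tp [(x,y)] h"
  by (simp add: brL_def)
lemma brL_single_Nil: "brL sc tp [(x,y)] [] = []"
  by (simp add: brL_def)

lemma LopBr: "Lop tp (brL sc tp [(x,y)] h) z = tp x y (Lop tp h z) + Rop tp h (tp x y z)"
proof (induction h)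
  case Nil then show ?case by (simp add: brL_single_Nil)
next
  case (Cons p h)
  obtain u w where p: "p = (u,w)" by (cases p)
  show ?case using Cons by (simp add: p brL_single_Cons ax1 ax2 algebra_simps)
qed

lemma LRB: "tp x y (Lop tp h z + Rop tp h z) = 0"
proof (induction h)
  case Nil then show ?case by simp
next
  case (Cons p h)
  obtain u w where p: "p = (u,w)" by (cases p)
  have "tp x y (tp u w z + (tp z u w - tp z w u)) = 0" by (simp add: ax1 ax2 algebra_simps)
  then show ?case using Cons by (simp add: p algebra_simps)
qed

lemma RopBr: "Rop tp (brL sc tp [(x,y)] h) z = Rop tp h (Rop tp [(x,y)] z) - Rop tp [(x,y)] (Rop tp h z)"
proof (induction h)
  case Nil then show ?case by (simp add: brL_single_Nil)
next
  case (Cons p h)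
  obtain u w where p: "p = (u,w)" by (cases p)
  show ?case using Cons by (simp add: p brL_single_Cons ax1 ax2 algebra_simps)
qed

end

locale LTSC = LT sc tp for sc :: "'k::field \<Rightarrow> 'v::ab_group_add \<Rightarrow> 'v" and tp +
  fixes H :: "'v L0 set"
  assumes spl: "split_LTS sc tp H"
    and sym1: "symmetric_set (Lambda1 sc tp H)"
    and sym0: "symmetric_set (Lambda0 sc tp H)"
begin

abbreviation "L1 \<equiv> Lambda1 sc tp H"
abbreviation "LL0 \<equiv> Lambda0 sc tp H"
abbreviation "Tr \<equiv> Troot sc tp H"
abbreviation "dH \<equiv> dualH sc tp H"

lemma ds: "is_direct_sum sc (insert 0 L1) Tr UNIV"
  using spl unfolding split_LTS_def by (rule conjunct1)

lemma dec: "\<exists>F f. finite F \<and> F \<subseteq> insert 0 L1 \<and> (\<forall>i\<in>F. f i \<in> Tr i) \<and> x = (\<Sum>i\<in>F. f i)"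
proof -
  have "x \<in> UNIV" by simp
  then show ?thesis using ds unfolding is_direct_sum_def by (elim conjE allE iffE) simp
qed

lemma uniq: "finite F \<Longrightarrow> F \<subseteq> insert 0 L1 \<Longrightarrow> (\<forall>i\<in>F. f i \<in> Tr i) \<Longrightarrow> (\<Sum>i\<in>F. f i) = 0 \<Longrightarrow> i \<in> F \<Longrightarrow> f i = 0"
proof -
  assume a: "finite F" "F \<subseteq> insert 0 L1" "\<forall>i\<in>F. f i \<in> Tr i" "(\<Sum>i\<in>F. f i) = 0" "i \<in> F"
  have "\<forall>F f. finite F \<longrightarrow> F \<subseteq> insert 0 L1 \<longrightarrow> (\<forall>i\<in>F. f i \<in> Tr i) \<longrightarrow> (\<Sum>i\<in>F. f i) = 0
            \<longrightarrow> (\<forall>i\<in>F. f i = 0)" using ds unfolding is_direct_sum_def by (elim conjE)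
  then show ?thesis using a by blast
qed

lemma T00: "x \<in> Tr 0 \<Longrightarrow> y \<in> Tr 0 \<Longrightarrow> z \<in> Tr 0 \<Longrightarrow> tp x y z = 0"
  using spl unfolding split_LTS_def by (elim conjE) blast

lemma Tpm0: "\<alpha> \<in> L1 \<Longrightarrow> x \<in> Tr \<alpha> \<Longrightarrow> y \<in> Tr (- \<alpha>) \<Longrightarrow> z \<in> Tr 0 \<Longrightarrow> tp x y z = 0"
  using spl unfolding split_LTS_def by (elim conjE) blast

lemma L1neg: "\<alpha> \<in> L1 \<Longrightarrow> - \<alpha> \<in> L1" using sym1 by (simp add: symmetric_set_def)
lemma L0neg: "\<alpha> \<in> LL0 \<Longrightarrow> - \<alpha> \<in> LL0" using sym0 by (simp add: symmetric_set_def)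
lemma L1neg_iff[simp]: "- \<alpha> \<in> L1 \<longleftrightarrow> \<alpha> \<in> L1" using L1neg[of "-\<alpha>"] L1neg[of \<alpha>] by auto
lemma L0neg_iff[simp]: "- \<alpha> \<in> LL0 \<longleftrightarrow> \<alpha> \<in> LL0" using L0neg[of "-\<alpha>"] L0neg[of \<alpha>] by auto
lemma L1_nz: "\<alpha> \<in> L1 \<Longrightarrow> \<alpha> \<noteq> 0" by (simp add: Lambda1_def)
lemma L1_dH: "\<alpha> \<in> L1 \<Longrightarrow> dH \<alpha>" by (simp add: Lambda1_def)

lemma dH_add: "dH a \<Longrightarrow> dH b \<Longrightarrow> dH (a + b)"
  by (simp add: dualH_def algebra_simps)
lemma dH_neg: "dH a \<Longrightarrow> dH (- a)"
  by (simp add: dualH_def algebra_simps)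
lemma dH_0: "dH 0"
  by (simp add: dualH_def)

lemma Tr_mem: "t \<in> Tr a \<longleftrightarrow> (\<forall>h\<in>H. Rop tp h t = sc (a h) t)"
  by (simp add: Troot_def)

lemma Tr_0[simp]: "0 \<in> Tr a" by (simp add: Tr_mem)
lemma Tr_add: "x \<in> Tr a \<Longrightarrow> y \<in> Tr a \<Longrightarrow> x + y \<in> Tr a"
  by (simp add: Tr_mem vs.scale_right_distrib)
lemma Tr_scale: "x \<in> Tr a \<Longrightarrow> sc k x \<in> Tr a"
  by (simp add: Tr_mem vs.scale_left_commute)
lemma Tr_neg: "x \<in> Tr a \<Longrightarrow> - x \<in> Tr a"
  by (simp add: Tr_mem)
lemma Tr_diff: "x \<in> Tr a \<Longrightarrow> y \<in> Tr a \<Longrightarrow> x - y \<in> Tr a"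
  by (simp add: Tr_mem vs.scale_right_diff_distrib)
lemma Tr_sub: "vs.subspace (Tr a)"
  by (simp add: vs.subspace_def Tr_add Tr_scale)

lemma Tr_mult: "x \<in> Tr a \<Longrightarrow> y \<in> Tr b \<Longrightarrow> z \<in> Tr c \<Longrightarrow> tp x y z \<in> Tr (a + b + c)"
  by (simp add: Tr_mem deriv vs.scale_left_distrib)

lemma Tr_nz_root: "x \<in> Tr a \<Longrightarrow> x \<noteq> 0 \<Longrightarrow> dH a \<Longrightarrow> a \<in> insert 0 L1"
  unfolding Lambda1_def by auto

lemma L0root_mem: assumes "x \<in> Tr a" "y \<in> Tr b" shows "[(x,y)] \<in> L0root sc tp H (a + b)"
  unfolding L0root_def
proof (intro CollectI ballI)
  fix h assume h: "h \<in> H"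
  have rx: "Rop tp h x = sc (a h) x" and ry: "Rop tp h y = sc (b h) y"
    using assms h by (auto simp: Tr_mem)
  have L: "Lop tp (brL sc tp [(x,y)] h) z = Lop tp (smulL sc ((a+b) h) [(x,y)]) z" for z
  proof -
    have "Lop tp (brL sc tp [(x,y)] h) z = tp x y (Lop tp h z + Rop tp h z) + sc (a h + b h) (tp x y z)"
      by (simp add: LopBr deriv rx ry vs.scale_left_distrib algebra_simps)
    also have "\<dots> = sc (a h + b h) (tp x y z)" using LRB[of x y h z] by simp
    finally show ?thesis by (simp add: smulL_def Lop_def)
  qed
  have R: "Rop tp (brL sc tp [(x,y)] h) z = Rop tp (smulL sc ((a+b) h) [(x,y)]) z" for z
    by (simp add: RopBr deriv rx ry smulL_def vs.scale_left_distrib vs.scale_right_diff_distrib)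
  show "eqL tp (brL sc tp [(x, y)] h) (smulL sc ((a + b) h) [(x, y)])"
    unfolding eqL_def using L R by auto
qed

lemma neqL1: "tp x y z \<noteq> 0 \<Longrightarrow> \<not> eqL tp [(x,y)] []"
  unfolding eqL_def by (metis Lop_Cons Lop_Nil add.right_neutral)
lemma neqL2: "tp x y z - tp x z y \<noteq> 0 \<Longrightarrow> \<not> eqL tp [(y,z)] []"
  unfolding eqL_def by (metis Rop_Cons Rop_Nil add.right_neutral)

lemma L0_mem: "x \<in> Tr a \<Longrightarrow> y \<in> Tr b \<Longrightarrow> dH a \<Longrightarrow> dH b \<Longrightarrow> a + b \<noteq> 0 \<Longrightarrow> \<not> eqL tp [(x,y)] [] \<Longrightarrow> a + b \<in> LL0"
  unfolding Lambda0_def using L0root_mem dH_add by blast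


section \<open>Connections\<close>

abbreviation "conn \<equiv> connected_roots sc tp H"

definition pth :: "nat \<Rightarrow> (nat \<Rightarrow> 'v L0 \<Rightarrow> 'k) \<Rightarrow> bool" where
  "pth n P \<longleftrightarrow> P 0 = 0 \<and> (\<forall>i\<in>{1..2*n+1}. P i - P (i-1) \<in> insert 0 L1)
     \<and> (\<forall>k\<le>n. P (2*k+1) \<in> L1) \<and> (\<forall>k\<in>{1..n}. P (2*k) \<in> LL0)"

lemma pthD: "pth n P \<Longrightarrow> i \<in> {1..2*n+1} \<Longrightarrow> P i - P (i-1) \<in> insert 0 L1"
  unfolding pth_def by blast
lemma pthO: "pth n P \<Longrightarrow> k \<le> n \<Longrightarrow> P (2*k+1) \<in> L1"
  unfolding pth_def by blast
lemma pthE: "pth n P \<Longrightarrow> k \<in> {1..n} \<Longrightarrow> P (2*k) \<in> LL0"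
  unfolding pth_def by blast
lemma ins_neg: "x \<in> insert 0 L1 \<Longrightarrow> - x \<in> insert 0 L1"
  using L1neg by auto

lemma sum_tel: "(\<Sum>i=1..(k::nat). (P i - P (i-1) :: 'v L0 \<Rightarrow> 'k)) = P k - P 0"
proof (induction k)
  case 0 then show ?case by simp
next
  case (Suc k)
  have "(\<Sum>i=1..Suc k. (P i - P (i-1) :: 'v L0 \<Rightarrow> 'k)) = (\<Sum>i=1..k. (P i - P (i-1))) + (P (Suc k) - P k)"
    by (rule sum.cl_ivl_Suc[THEN trans]) simp
  then show ?case using Suc by simp
qed

lemma conn_iff: "conn \<alpha> \<beta> \<longleftrightarrow> (\<exists>n P. pth n P \<and> P 1 = \<alpha> \<and> P (2*n+1) \<in> {\<beta>, -\<beta>})"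
proof
  assume "conn \<alpha> \<beta>"
  then obtain n :: nat and a where a1: "\<forall>i\<in>{1..2*n+1}. a i \<in> insert 0 L1"
    and a2: "\<forall>k\<in>{0..n}. (\<Sum>i=1..2*k+1. a i) \<in> L1"
    and a3: "\<forall>k\<in>{1..n}. (\<Sum>i=1..2*k. a i) \<in> LL0"
    and a4: "a 1 = \<alpha>" and a5: "(\<Sum>i=1..2*n+1. a i) \<in> {\<beta>, - \<beta>}"
    unfolding connected_roots_def by blast
  define P where "P k = (\<Sum>i=1..k. a i)" for k
  have d: "P i - P (i-1) = a i" if "i \<ge> 1" for i
  proof -
    have "i = Suc (i - 1)" using that by simp
    then obtain j where "i = Suc j" by blast
    moreover have "P (Suc j) = P j + a (Suc j)" unfolding P_def by (rule sum.cl_ivl_Suc[THEN trans]) simp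
    ultimately show ?thesis by simp
  qed
  have "pth n P" unfolding pth_def
  proof (intro conjI ballI allI impI)
    show "P 0 = 0" by (simp add: P_def)
  next
    fix i assume i: "i \<in> {1..2*n+1}"
    then have "P i - P (i-1) = a i" using d by simp
    then show "P i - P (i-1) \<in> insert 0 L1" using a1 i by simp
  next
    fix k assume "k \<le> n" then show "P (2*k+1) \<in> L1" using a2 unfolding P_def by simp
  next
    fix k assume "k \<in> {1..n}" then show "P (2*k) \<in> LL0" using a3 unfolding P_def by blast
  qed
  moreover have "P 1 = \<alpha>" using a4 by (simp add: P_def)
  moreover have "P (2*n+1) \<in> {\<beta>, -\<beta>}" using a5 unfolding P_def .
  ultimately show "\<exists>n P. pth n P \<and> P 1 = \<alpha> \<and> P (2*n+1) \<in> {\<beta>, -\<beta>}" by blast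
next
  assume "\<exists>n P. pth n P \<and> P 1 = \<alpha> \<and> P (2*n+1) \<in> {\<beta>, -\<beta>}"
  then obtain n P where p: "pth n P" "P 1 = \<alpha>" "P (2*n+1) \<in> {\<beta>, -\<beta>}" by blast
  have P0: "P 0 = 0" using p(1) unfolding pth_def by blast
  define a where "a i = P i - P (i-1)" for i
  have S: "(\<Sum>i=1..k. a i) = P k" for k unfolding a_def using sum_tel[of P k] P0 by simp
  show "conn \<alpha> \<beta>" unfolding connected_roots_def
  proof (intro exI[of _ n] exI[of _ a] conjI ballI)
    fix i assume "i \<in> {1..2*n+1}" then show "a i \<in> insert 0 L1" unfolding a_def by (rule pthD[OF p(1)])
  next
    fix k assume "k \<in> {0..n}" then show "(\<Sum>i=1..2*k+1. a i) \<in> L1" unfolding S using pthO[OF p(1)] by simp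
  next
    fix k assume "k \<in> {1..n}" then show "(\<Sum>i=1..2*k. a i) \<in> LL0" unfolding S by (rule pthE[OF p(1)])
  next
    show "a 1 = \<alpha>" using p(2) P0 by (simp add: a_def)
  next
    show "(\<Sum>i=1..2*n+1. a i) \<in> {\<beta>, -\<beta>}" unfolding S by (rule p(3))
  qed
qed

lemma conn_refl: assumes "\<alpha> \<in> L1" shows "conn \<alpha> \<alpha>"
proof -
  define P where "P k = (if k = 0 then 0 else \<alpha>)" for k :: nat
  have "pth 0 P" using assms by (auto simp: pth_def P_def)
  then show ?thesis unfolding conn_iff by (intro exI[of _ 0] exI[of _ P]) (auto simp: P_def)
qed

lemma conn_neg: "conn \<alpha> \<beta> \<Longrightarrow> conn \<alpha> (- \<beta>)"
  unfolding conn_iff by auto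

lemma conn_negD: "conn \<alpha> (- \<beta>) \<Longrightarrow> conn \<alpha> \<beta>"
  using conn_neg[of \<alpha> "-\<beta>"] by simp

lemma conn3: assumes "\<alpha> \<in> L1" "\<nu> \<in> insert 0 L1" "\<alpha> + \<nu> \<in> LL0" "\<xi> \<in> insert 0 L1" "\<alpha> + \<nu> + \<xi> \<in> L1"
  shows "conn \<alpha> (\<alpha> + \<nu> + \<xi>)"
proof -
  define P where "P k = (if k = 0 then 0 else if k = 1 then \<alpha> else if k = 2 then \<alpha> + \<nu> else \<alpha> + \<nu> + \<xi>)" for k :: nat
  have i3: "i \<in> {1..3} \<Longrightarrow> i = 1 \<or> i = 2 \<or> i = (3::nat)" for i by auto
  have "pth 1 P" unfolding pth_def
  proof (intro conjI ballI allI impI)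
    fix i :: nat assume "i \<in> {1..2*1+1}"
    then have "i = 1 \<or> i = 2 \<or> i = 3" by auto
    then show "P i - P (i-1) \<in> insert 0 L1" using assms by (auto simp: P_def)
  next
    fix k :: nat assume "k \<le> 1"
    then have "k = 0 \<or> k = 1" by auto
    then show "P (2*k+1) \<in> L1" using assms by (auto simp: P_def)
  next
    fix k :: nat assume "k \<in> {1..1}"
    then show "P (2*k) \<in> LL0" using assms by (auto simp: P_def)
  qed (simp add: P_def)
  then show ?thesis unfolding conn_iff by (intro exI[of _ 1] exI[of _ P]) (auto simp: P_def)
qed

definition sg :: "bool \<Rightarrow> ('v L0 \<Rightarrow> 'k) \<Rightarrow> ('v L0 \<Rightarrow> 'k)" where
  "sg e f = (if e then f else - f)"

lemma sg_simps[simp]: "sg e f \<in> L1 \<longleftrightarrow> f \<in> L1" "sg e f \<in> LL0 \<longleftrightarrow> f \<in> LL0"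
  "sg e f = 0 \<longleftrightarrow> f = 0" "sg e f - sg e g = sg e (f - g)"
  by (auto simp: sg_def)

lemma sg_ins: "sg e f \<in> insert 0 L1 \<longleftrightarrow> f \<in> insert 0 L1"
  by (auto simp: sg_def)

lemma conn_sym: assumes "conn \<alpha> \<beta>" shows "conn \<beta> \<alpha>"
proof -
  obtain n P where p: "pth n P" "P 1 = \<alpha>" "P (2*n+1) \<in> {\<beta>, -\<beta>}" using assms conn_iff by blast
  define e where "e = (P (2*n+1) = \<beta>)"
  define Q where "Q k = (if k = 0 then 0 else sg e (P (2*n+2-k)))" for k
  have pb: "sg e (P (2*n+1)) = \<beta>" using p(3) by (auto simp: sg_def e_def)
  have bL1: "\<beta> \<in> L1"
  proof -
    have "P (2*n+1) \<in> L1" using p(1) by (auto simp: pth_def)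
    then show ?thesis unfolding pb[symmetric] sg_simps(1) .
  qed
  have "pth n Q" unfolding pth_def
  proof (intro conjI ballI allI impI)
    show "Q 0 = 0" by (simp add: Q_def)
  next
    fix i assume i: "i \<in> {1..2*n+1}"
    show "Q i - Q (i-1) \<in> insert 0 L1"
    proof (cases "i = 1")
      case True then show ?thesis using pb bL1 by (simp add: Q_def)
    next
      case False
      define j where "j = 2*n+3-i"
      have j: "j \<in> {1..2*n+1}" "2*n+2-i = j - 1" "2*n+2-(i-1) = j" using i False by (auto simp: j_def)
      have "P j - P (j-1) \<in> insert 0 L1" using pthD[OF p(1) j(1)] .
      then have "- (P j - P (j-1)) \<in> insert 0 L1" by (rule ins_neg)
      moreover have "Q i - Q (i-1) = sg e (- (P j - P (j-1)))"
        using i False j by (simp add: Q_def sg_def)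
      ultimately show ?thesis by (simp add: sg_ins)
    qed
  next
    fix k assume k: "k \<le> n"
    have "2*n+2-(2*k+1) = 2*(n-k)+1" using k by arith
    moreover have "P (2*(n-k)+1) \<in> L1" using p(1) by (auto simp: pth_def)
    ultimately show "Q (2*k+1) \<in> L1" by (simp add: Q_def)
  next
    fix k assume k: "k \<in> {1..n}"
    have "2*n+2-(2*k) = 2*(n+1-k)" using k by auto
    moreover have "n+1-k \<in> {1..n}" using k by auto
    then have "P (2*(n+1-k)) \<in> LL0" by (rule pthE[OF p(1)])
    ultimately show "Q (2*k) \<in> LL0" using k by (simp add: Q_def)
  qed
  moreover have "Q 1 = \<beta>" using pb by (simp add: Q_def)
  moreover have "Q (2*n+1) \<in> {\<alpha>, -\<alpha>}" using p(2) by (simp add: Q_def sg_def)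
  ultimately show ?thesis unfolding conn_iff by blast
qed

lemma conn_trans: assumes "conn \<alpha> \<beta>" "conn \<beta> \<gamma>" shows "conn \<alpha> \<gamma>"
proof -
  obtain n P where p: "pth n P" "P 1 = \<alpha>" "P (2*n+1) \<in> {\<beta>, -\<beta>}" using assms(1) conn_iff by blast
  obtain m R where r: "pth m R" "R 1 = \<beta>" "R (2*m+1) \<in> {\<gamma>, -\<gamma>}" using assms(2) conn_iff by blast
  define e where "e = (P (2*n+1) = \<beta>)"
  have pb: "sg e \<beta> = P (2*n+1)" using p(3) by (auto simp: sg_def e_def)
  define Q where "Q k = (if k \<le> 2*n then P k else sg e (R (k - 2*n)))" for k
  have Q1: "Q 1 = \<alpha>"
  proof (cases "n = 0")
    case True then show ?thesis using pb p(2) r(2) by (simp add: Q_def)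
  next
    case False then show ?thesis using p(2) by (simp add: Q_def)
  qed
  have "pth (n+m) Q" unfolding pth_def
  proof (intro conjI ballI allI impI)
    show "Q 0 = 0" using p(1) by (simp add: Q_def pth_def)
  next
    fix i assume i: "i \<in> {1..2*(n+m)+1}"
    consider "i \<le> 2*n" | "i = 2*n+1" | "i \<ge> 2*n+2" by linarith
    then show "Q i - Q (i-1) \<in> insert 0 L1"
    proof cases
      case 1 then show ?thesis using p(1) i by (auto simp: Q_def pth_def)
    next
      case 2
      have "Q i - Q (i-1) = P (2*n+1) - P (2*n+1-1)" using 2 pb r(2) by (simp add: Q_def)
      then show ?thesis using pthD[OF p(1), of "2*n+1"] by simp
    next
      case 3
      define j where "j = i - 2*n"
      have j: "j \<in> {1..2*m+1}" "i - 1 - 2*n = j - 1" "\<not> i \<le> 2*n" "\<not> i - 1 \<le> 2 * n" using i 3 by (auto simp: j_def)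
      have "Q i - Q (i-1) = sg e (R j - R (j-1))" using j by (simp add: Q_def j_def)
      moreover have "R j - R (j-1) \<in> insert 0 L1" using pthD[OF r(1) j(1)] .
      ultimately show ?thesis by (simp add: sg_ins)
    qed
  next
    fix k assume k: "k \<le> n + m"
    show "Q (2*k+1) \<in> L1"
    proof (cases "k < n")
      case True then show ?thesis using p(1) by (auto simp: Q_def pth_def)
    next
      case False
      have "2*k+1-2*n = 2*(k-n)+1" using False by arith
      moreover have "R (2*(k-n)+1) \<in> L1" using r(1) k by (auto simp: pth_def)
      ultimately show ?thesis using False by (simp add: Q_def)
    qed
  next
    fix k assume k: "k \<in> {1..n + m}"
    show "Q (2*k) \<in> LL0"
    proof (cases "k \<le> n")
      case True then show ?thesis using p(1) k by (auto simp: Q_def pth_def)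
    next
      case False
      have "2*k-2*n = 2*(k-n)" by arith
      moreover have "k-n \<in> {1..m}" using k False by auto
      then have "R (2*(k-n)) \<in> LL0" by (rule pthE[OF r(1)])
      ultimately show ?thesis using False by (simp add: Q_def)
    qed
  qed
  moreover have "Q (2*(n+m)+1) \<in> {\<gamma>, -\<gamma>}"
  proof -
    have "2*(n+m)+1 - 2*n = 2*m+1" by arith
    then show ?thesis using r(3) by (auto simp: Q_def sg_def)
  qed
  ultimately show ?thesis unfolding conn_iff using Q1 by blast
qed


abbreviation "cls \<equiv> conn_class sc tp H"

lemma cls_mem: "\<beta> \<in> cls \<alpha> \<longleftrightarrow> \<beta> \<in> L1 \<and> conn \<alpha> \<beta>"
  by (simp add: conn_class_def)
lemma cls_L1: "\<beta> \<in> cls \<alpha> \<Longrightarrow> \<beta> \<in> L1" by (simp add: cls_mem)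
lemma self_cls: "\<alpha> \<in> L1 \<Longrightarrow> \<alpha> \<in> cls \<alpha>" by (simp add: cls_mem conn_refl)
lemma cls_eq: assumes "\<beta> \<in> cls \<alpha>" shows "cls \<beta> = cls \<alpha>"
proof -
  have ab: "conn \<alpha> \<beta>" and ba: "conn \<beta> \<alpha>" using assms conn_sym by (auto simp: cls_mem)
  show ?thesis using conn_trans[OF ab] conn_trans[OF ba] by (auto simp: cls_mem)
qed
lemma cls_disj: assumes "cls \<alpha> \<noteq> cls \<alpha>'" shows "cls \<alpha> \<inter> cls \<alpha>' = {}"
  using cls_eq assms by blast
lemma cls_neg: "\<beta> \<in> cls \<alpha> \<Longrightarrow> - \<beta> \<in> cls \<alpha>"
  by (simp add: cls_mem conn_neg)
lemma cls_ins_neg: "\<beta> \<in> insert 0 (cls \<alpha>) \<Longrightarrow> - \<beta> \<in> insert 0 (cls \<alpha>)"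
  using cls_neg by auto

lemma tp_nz: "tp x y z \<noteq> 0 \<Longrightarrow> x \<noteq> 0 \<and> y \<noteq> 0 \<and> z \<noteq> 0" by auto

lemma K_hub:
  assumes d: "dH r1" "dH r2" "dH r3" and t: "x \<in> Tr r1" "y \<in> Tr r2" "z \<in> Tr r3" and nz: "tp x y z \<noteq> 0"
  shows "\<exists>hb. \<forall>\<mu>\<in>{r1,r2,r3,r1+r2+r3}. \<mu> \<noteq> 0 \<longrightarrow> conn hb \<mu>"
proof -
  have i1: "r1 \<in> insert 0 L1" using Tr_nz_root[OF t(1) _ d(1)] tp_nz[OF nz] by blast
  have i2: "r2 \<in> insert 0 L1" using Tr_nz_root[OF t(2) _ d(2)] tp_nz[OF nz] by blast
  have i3: "r3 \<in> insert 0 L1" using Tr_nz_root[OF t(3) _ d(3)] tp_nz[OF nz] by blast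
  have iS: "r1+r2+r3 \<in> insert 0 L1" using Tr_nz_root[OF Tr_mult[OF t] nz] dH_add d by blast
  show ?thesis
  proof (cases "r1 = 0")
    case False
    have r1L: "r1 \<in> L1" using i1 False by simp
    show ?thesis
    proof (intro exI[of _ r1] ballI impI)
      fix \<mu> assume mu: "\<mu> \<in> {r1,r2,r3,r1+r2+r3}" and mnz: "\<mu> \<noteq> 0"
      show "conn r1 \<mu>"
      proof (cases "r1 + r2 = 0")
        case False
        have s0: "r1 + r2 \<in> LL0" using L0_mem[OF t(1,2) d(1,2) False neqL1[OF nz]] .
        have c2: "conn r1 r2" if "r2 \<noteq> 0"
        proof -
          have "conn r1 (r1 + r2 + - r1)" using conn3[OF r1L i2 s0 ins_neg[OF i1]] i2 that by simp
          then show ?thesis by (simp add: algebra_simps)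
        qed
        have c3: "conn r1 r3" if "r3 \<noteq> 0"
        proof -
          have "r1 + r2 + - (r1 + r2 + r3) = - r3" by (simp add: algebra_simps)
          moreover have "conn r1 (r1 + r2 + - (r1 + r2 + r3))"
            using conn3[OF r1L i2 s0 ins_neg[OF iS]] i3 that by (simp add: algebra_simps)
          ultimately show ?thesis using conn_negD by simp
        qed
        have cs: "conn r1 (r1+r2+r3)" if "r1+r2+r3 \<noteq> 0"
          using conn3[OF r1L i2 s0 i3] iS that by simp
        show ?thesis using mu mnz c2 c3 cs conn_refl[OF r1L] by auto
      next
        case True
        then have r2: "r2 = - r1" by (simp add: eq_neg_iff_add_eq_0 add.commute)
        have c2: "conn r1 r2" using r2 conn_neg[OF conn_refl[OF r1L]] by simp
        have c3: "conn r1 r3" if r3nz: "r3 \<noteq> 0"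
        proof (cases "tp x z y = 0")
          case False
          show ?thesis
          proof (cases "r1 + r3 = 0")
            case True
            then have "r3 = - r1" by (simp add: eq_neg_iff_add_eq_0 add.commute)
            then show ?thesis using conn_neg[OF conn_refl[OF r1L]] by simp
          next
            case t0: False
            have "r1 + r3 \<in> LL0" using L0_mem[OF t(1,3) d(1,3) t0 neqL1[OF False]] .
            then have "conn r1 (r1 + r3 + - r1)" using conn3[OF r1L i3 _ ins_neg[OF i1]] i3 r3nz by simp
            then show ?thesis by (simp add: algebra_simps)
          qed
        next
          case True
          then have nz2: "tp x y z - tp x z y \<noteq> 0" using nz by simp
          show ?thesis
          proof (cases "r2 + r3 = 0")
            case True
            then have "r3 = r1" using r2 by (simp add: algebra_simps eq_neg_iff_add_eq_0)
            then show ?thesis using conn_refl[OF r1L] by simp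
          next
            case u0: False
            have "r2 + r3 \<in> LL0" using L0_mem[OF t(2,3) d(2,3) u0 neqL2[OF nz2]] .
            then have m: "r1 + - r3 \<in> LL0" using r2 L0neg[of "r2 + r3"] by (simp add: algebra_simps)
            have "conn r1 (r1 + - r3 + - r1)" using conn3[OF r1L ins_neg[OF i3] m ins_neg[OF i1]] i3 r3nz
              by (simp add: algebra_simps)
            then show ?thesis using conn_negD by (simp add: algebra_simps)
          qed
        qed
        have "r1 + r2 + r3 = r3" using True by simp
        then show ?thesis using mu mnz c2 c3 conn_refl[OF r1L] by auto
      qed
    qed
  next
    case r10: True
    show ?thesis
    proof (cases "r2 = 0")
      case False
      have r2L: "r2 \<in> L1" using i2 False by simp
      have s0: "r2 \<in> LL0" using L0_mem[OF t(1,2) d(1,2) _ neqL1[OF nz]] r10 False by simp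
      have s0': "r2 + 0 \<in> LL0" using s0 by simp
      have i0: "(0::'v L0 \<Rightarrow> 'k) \<in> insert 0 L1" by simp
      show ?thesis
      proof (intro exI[of _ r2] ballI impI)
        fix \<mu> assume mu: "\<mu> \<in> {r1,r2,r3,r1+r2+r3}" and mnz: "\<mu> \<noteq> 0"
        have cs: "conn r2 (r2 + r3)" if "r2 + r3 \<noteq> 0"
          using conn3[OF r2L i0 s0' i3] iS r10 that by simp
        have c3: "conn r2 r3" if "r3 \<noteq> 0"
        proof -
          have "conn r2 (r2 + 0 + - (r2 + r3))" using conn3[OF r2L i0 s0' ins_neg[OF iS[unfolded r10]]] i3 that
            by (simp add: r10)
          then show ?thesis using conn_negD by simp
        qed
        show "conn r2 \<mu>" using mu mnz cs c3 conn_refl[OF r2L] r10 by auto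
      qed
    next
      case True
      show ?thesis
      proof (intro exI[of _ r3] ballI impI)
        fix \<mu> assume mu: "\<mu> \<in> {r1,r2,r3,r1+r2+r3}" and mnz: "\<mu> \<noteq> 0"
        then have "\<mu> = r3" using r10 True by auto
        then show "conn r3 \<mu>" using conn_refl i3 mnz by auto
      qed
    qed
  qed
qed

lemma Kc:
  assumes d: "dH r1" "dH r2" "dH r3" and t: "x \<in> Tr r1" "y \<in> Tr r2" "z \<in> Tr r3" and nz: "tp x y z \<noteq> 0"
    and g: "\<gamma> \<in> {r1,r2,r3,r1+r2+r3}" "\<gamma> \<in> cls \<alpha>"
  shows "r1 \<in> insert 0 (cls \<alpha>) \<and> r2 \<in> insert 0 (cls \<alpha>) \<and> r3 \<in> insert 0 (cls \<alpha>) \<and> r1+r2+r3 \<in> insert 0 (cls \<alpha>)"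
proof -
  obtain hb where hb: "\<forall>\<mu>\<in>{r1,r2,r3,r1+r2+r3}. \<mu> \<noteq> 0 \<longrightarrow> conn hb \<mu>" using K_hub[OF d t nz] by blast
  have i: "\<forall>\<mu>\<in>{r1,r2,r3,r1+r2+r3}. \<mu> \<in> insert 0 L1"
    using Tr_nz_root[OF t(1) _ d(1)] Tr_nz_root[OF t(2) _ d(2)] Tr_nz_root[OF t(3) _ d(3)]
      tp_nz[OF nz] Tr_nz_root[OF Tr_mult[OF t] nz] dH_add d by auto
  have gnz: "\<gamma> \<noteq> 0" using g(2) cls_L1 L1_nz by blast
  have ag: "conn \<alpha> \<gamma>" using g(2) by (simp add: cls_mem)
  have "\<mu> \<in> insert 0 (cls \<alpha>)" if "\<mu> \<in> {r1,r2,r3,r1+r2+r3}" for \<mu>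
  proof (cases "\<mu> = 0")
    case False
    have "conn \<gamma> \<mu>" using conn_trans[OF conn_sym] hb g(1) that False gnz by blast
    then have "conn \<alpha> \<mu>" using conn_trans[OF ag] by blast
    moreover have "\<mu> \<in> L1" using i that False by auto
    ultimately show ?thesis by (simp add: cls_mem)
  qed simp
  then show ?thesis by simp
qed


section \<open>Ideals\<close>

definition G0 :: "('v L0 \<Rightarrow> 'k) set \<Rightarrow> 'v set" where
  "G0 \<Lambda> = {tp x y z | x y z \<beta>1 \<beta>2 \<beta>3. \<beta>1 \<in> insert 0 \<Lambda> \<and> \<beta>2 \<in> insert 0 \<Lambda> \<and> \<beta>3 \<in> insert 0 \<Lambda>
        \<and> \<beta>1 + \<beta>2 + \<beta>3 = 0
        \<and> x \<in> Tr \<beta>1 \<and> y \<in> Tr \<beta>2 \<and> z \<in> Tr \<beta>3}"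

definition GV :: "('v L0 \<Rightarrow> 'k) set \<Rightarrow> 'v set" where
  "GV \<Lambda> = (\<Union>\<gamma>\<in>\<Lambda>. Tr \<gamma>)"

abbreviation "Ip \<Lambda> \<equiv> vs.span (G0 \<Lambda> \<union> GV \<Lambda>)"

lemma T0part_eq: "T0part sc tp H \<Lambda> = vs.span (G0 \<Lambda>)" by (simp add: T0part_def G0_def)
lemma Vpart_eq: "Vpart sc tp H \<Lambda> = vs.span (GV \<Lambda>)" by (simp add: Vpart_def GV_def)
lemma Ipart_eq: "Ipart sc tp H \<Lambda> = Ip \<Lambda>" by (simp add: Ipart_def T0part_eq Vpart_eq vs.span_Un)

lemma G0E: "g \<in> G0 \<Lambda> \<Longrightarrow> (\<And>a b c r1 r2 r3. g = tp a b c \<Longrightarrow> r1 \<in> insert 0 \<Lambda> \<Longrightarrow> r2 \<in> insert 0 \<Lambda> \<Longrightarrow> r3 \<in> insert 0 \<Lambda>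
   \<Longrightarrow> r1 + r2 + r3 = 0 \<Longrightarrow> a \<in> Tr r1 \<Longrightarrow> b \<in> Tr r2 \<Longrightarrow> c \<in> Tr r3 \<Longrightarrow> P) \<Longrightarrow> P"
  unfolding G0_def by blast

lemma G0I: "r1 \<in> insert 0 \<Lambda> \<Longrightarrow> r2 \<in> insert 0 \<Lambda> \<Longrightarrow> r3 \<in> insert 0 \<Lambda>
   \<Longrightarrow> r1 + r2 + r3 = 0 \<Longrightarrow> a \<in> Tr r1 \<Longrightarrow> b \<in> Tr r2 \<Longrightarrow> c \<in> Tr r3 \<Longrightarrow> tp a b c \<in> G0 \<Lambda>"
  unfolding G0_def by blast

lemma rt_dH: "\<mu> \<in> insert 0 L1 \<Longrightarrow> dH \<mu>"
  by (erule insertE) (simp_all add: dH_0 L1_dH)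
lemma cls_dH: "\<mu> \<in> insert 0 (cls \<alpha>) \<Longrightarrow> dH \<mu>"
  by (erule insertE) (simp_all add: dH_0 L1_dH cls_L1)

lemma rv_all:
  assumes M: "vs.subspace M" and f: "module_hom sc sc f"
    and r: "\<And>\<mu> x. \<mu> \<in> insert 0 L1 \<Longrightarrow> x \<in> Tr \<mu> \<Longrightarrow> f x \<in> M"
  shows "f a \<in> M"
proof -
  obtain F g where F1: "finite F" and F2: "F \<subseteq> insert 0 L1" and F3: "\<forall>i\<in>F. g i \<in> Tr i"
    and F4: "a = (\<Sum>i\<in>F. g i)" using dec[of a] by (elim exE conjE)
  have "(\<Sum>i\<in>F. f (g i)) \<in> M"
  proof (rule vs.subspace_sum[OF M])
    fix i assume "i \<in> F"
    then show "f (g i) \<in> M" using F2 F3 r by blast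
  qed
  moreover have "f a = (\<Sum>i\<in>F. f (g i))" unfolding F4 by (rule module_hom.sum[OF f])
  ultimately show ?thesis by simp
qed

lemma Ip_sub: "vs.subspace (Ip \<Lambda>)" by simp
lemma Ip0: "0 \<in> Ip \<Lambda>" by (rule vs.span_zero)

lemma prod_in_I:
  assumes d: "dH r1" "dH r2" "dH r3" and t: "x \<in> Tr r1" "y \<in> Tr r2" "z \<in> Tr r3"
    and c: "r1 \<in> cls \<alpha> \<or> r2 \<in> cls \<alpha> \<or> r3 \<in> cls \<alpha> \<or> r1 + r2 + r3 \<in> cls \<alpha>"
  shows "tp x y z \<in> Ip (cls \<alpha>)"
proof (cases "tp x y z = 0")
  case True then show ?thesis by (simp add: vs.span_zero)
next
  case False
  obtain \<gamma> where g: "\<gamma> \<in> {r1,r2,r3,r1+r2+r3}" "\<gamma> \<in> cls \<alpha>" using c by blast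
  have k: "r1 \<in> insert 0 (cls \<alpha>) \<and> r2 \<in> insert 0 (cls \<alpha>) \<and> r3 \<in> insert 0 (cls \<alpha>) \<and> r1+r2+r3 \<in> insert 0 (cls \<alpha>)"
    using Kc[OF d t False g] .
  have m: "tp x y z \<in> Tr (r1 + r2 + r3)" using Tr_mult[OF t] .
  show ?thesis
  proof (cases "r1 + r2 + r3 = 0")
    case True
    then have "tp x y z \<in> G0 (cls \<alpha>)" using k t by (intro G0I) auto
    then show ?thesis by (intro vs.span_base) simp
  next
    case False
    then have "tp x y z \<in> GV (cls \<alpha>)" using k m unfolding GV_def by auto
    then show ?thesis by (intro vs.span_base) simp
  qed
qed

lemma gen_nz:
  assumes r: "r1 \<in> insert 0 (cls \<alpha>)" "r2 \<in> insert 0 (cls \<alpha>)" "r3 \<in> insert 0 (cls \<alpha>)" "r1 + r2 + r3 = 0"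
    and t: "a \<in> Tr r1" "b \<in> Tr r2" "c \<in> Tr r3" and nz: "tp a b c \<noteq> 0"
  shows "r3 \<in> cls \<alpha> \<and> (r1 \<in> cls \<alpha> \<or> r2 \<in> cls \<alpha>)"
proof -
  have r3: "r3 \<noteq> 0"
  proof
    assume r30: "r3 = 0"
    then have r2: "r2 = - r1" using r(4) by (simp add: eq_neg_iff_add_eq_0 add.commute)
    show False
    proof (cases "r1 = 0")
      case True then show False using T00 t nz r2 r30 by auto
    next
      case False
      then have "r1 \<in> L1" using r(1) cls_L1 by auto
      then show False using Tpm0 t nz r2 r30 by auto
    qed
  qed
  moreover have "r1 \<noteq> 0 \<or> r2 \<noteq> 0" using r(4) r3 by auto
  ultimately show ?thesis using r by auto
qed

lemma gen_TT_rv: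
  assumes r: "r1 \<in> insert 0 (cls \<alpha>)" "r2 \<in> insert 0 (cls \<alpha>)" "r3 \<in> insert 0 (cls \<alpha>)" "r1 + r2 + r3 = 0"
    and t: "a \<in> Tr r1" "b \<in> Tr r2" "c \<in> Tr r3"
    and y: "y \<in> Tr \<beta>" "dH \<beta>" and z: "z \<in> Tr \<delta>" "dH \<delta>"
  shows "tp (tp a b c) y z \<in> Ip (cls \<alpha>)"
proof (cases "tp a b c = 0")
  case True then show ?thesis by (simp add: vs.span_zero)
next
  case False
  have g: "r3 \<in> cls \<alpha>" "r1 \<in> cls \<alpha> \<or> r2 \<in> cls \<alpha>" using gen_nz[OF r t False] by auto
  have d: "dH r1" "dH r2" "dH r3" using r cls_dH by auto
  have e: "tp (tp a b c) y z = tp a b (tp c y z) + tp (tp a b y) c z + tp (tp a b z) c y - tp (tp a b z) y c"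
    by (simp add: ax2 algebra_simps)
  have 1: "tp a b (tp c y z) \<in> Ip (cls \<alpha>)"
    using prod_in_I[OF d(1,2) dH_add[OF dH_add[OF d(3) y(2)] z(2)] t(1,2) Tr_mult[OF t(3) y(1) z(1)]] g(2) by blast
  have 2: "tp (tp a b y) c z \<in> Ip (cls \<alpha>)"
    using prod_in_I[OF dH_add[OF dH_add[OF d(1,2)] y(2)] d(3) z(2) Tr_mult[OF t(1,2) y(1)] t(3) z(1)] g(1) by blast
  have 3: "tp (tp a b z) c y \<in> Ip (cls \<alpha>)"
    using prod_in_I[OF dH_add[OF dH_add[OF d(1,2)] z(2)] d(3) y(2) Tr_mult[OF t(1,2) z(1)] t(3) y(1)] g(1) by blast
  have 4: "tp (tp a b z) y c \<in> Ip (cls \<alpha>)"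
    using prod_in_I[OF dH_add[OF dH_add[OF d(1,2)] z(2)] y(2) d(3) Tr_mult[OF t(1,2) z(1)] y(1) t(3)] g(1) by blast
  show ?thesis unfolding e using 1 2 3 4 by (intro vs.span_add vs.span_diff)
qed

lemma mh_tp1: "module_hom sc sc (\<lambda>a. tp a b c)" by (rule mh1)
lemma mh_tp2: "module_hom sc sc (\<lambda>b. tp a b c)" by (rule mh2)
lemma mh_tp3: "module_hom sc sc (\<lambda>c. tp a b c)" by (rule mh3)

lemma rv_all2:
  assumes M: "vs.subspace M"
    and r: "\<And>\<mu> \<nu> x y. \<mu> \<in> insert 0 L1 \<Longrightarrow> x \<in> Tr \<mu> \<Longrightarrow> \<nu> \<in> insert 0 L1 \<Longrightarrow> y \<in> Tr \<nu> \<Longrightarrow> F x y \<in> M"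
    and f1: "\<And>y. module_hom sc sc (\<lambda>x. F x y)" and f2: "\<And>x. module_hom sc sc (\<lambda>y. F x y)"
  shows "F a b \<in> M"
proof -
  have "F x b \<in> M" if "\<mu> \<in> insert 0 L1" "x \<in> Tr \<mu>" for \<mu> x
    using rv_all[OF M f2[of x], of b] r that by blast
  then show ?thesis using rv_all[OF M f1[of b], of a] by blast
qed

lemma gen_TT:
  assumes g: "g \<in> G0 (cls \<alpha>)" shows "tp g a b \<in> Ip (cls \<alpha>)"
  using g
proof (rule G0E)
  fix a' b' c' r1 r2 r3
  assume h: "g = tp a' b' c'" "r1 \<in> insert 0 (cls \<alpha>)" "r2 \<in> insert 0 (cls \<alpha>)" "r3 \<in> insert 0 (cls \<alpha>)"
    "r1 + r2 + r3 = 0" "a' \<in> Tr r1" "b' \<in> Tr r2" "c' \<in> Tr r3"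
  show "tp g a b \<in> Ip (cls \<alpha>)"
    by (rule rv_all2[where F="\<lambda>a b. tp g a b", OF Ip_sub]) (auto simp: h(1) intro!: gen_TT_rv[OF h(2-8)] rt_dH mh2 mh3)
qed


lemma gen_right_rv:
  assumes r: "r1 \<in> insert 0 (cls \<alpha>)" "r2 \<in> insert 0 (cls \<alpha>)" "r3 \<in> insert 0 (cls \<alpha>)" "r1 + r2 + r3 = 0"
    and t: "a \<in> Tr r1" "b \<in> Tr r2" "c \<in> Tr r3"
    and y: "y \<in> Tr \<beta>" "dH \<beta>" and z: "z \<in> Tr \<delta>" "dH \<delta>"
  shows "tp y z (tp a b c) \<in> Ip (cls \<alpha>)"
proof (cases "tp a b c = 0")
  case True then show ?thesis by (simp add: vs.span_zero)
next
  case False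
  have g: "r3 \<in> cls \<alpha>" "r1 \<in> cls \<alpha> \<or> r2 \<in> cls \<alpha>" using gen_nz[OF r t False] by auto
  have d: "dH r1" "dH r2" "dH r3" using r cls_dH by auto
  have yz: "dH (\<beta> + \<delta>)" using dH_add y z by blast
  have e: "tp y z (tp a b c) = tp (tp y z a) b c - tp (tp y z b) a c - tp (tp y z c) a b + tp (tp y z c) b a"
    by (rule ax2)
  have 1: "tp (tp y z a) b c \<in> Ip (cls \<alpha>)"
    using prod_in_I[OF dH_add[OF yz d(1)] d(2) d(3) Tr_mult[OF y(1) z(1) t(1)] t(2) t(3)] g(1) by blast
  have 2: "tp (tp y z b) a c \<in> Ip (cls \<alpha>)"
    using prod_in_I[OF dH_add[OF yz d(2)] d(1) d(3) Tr_mult[OF y(1) z(1) t(2)] t(1) t(3)] g(1) by blast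
  have 3: "tp (tp y z c) a b \<in> Ip (cls \<alpha>)"
    using prod_in_I[OF dH_add[OF yz d(3)] d(1) d(2) Tr_mult[OF y(1) z(1) t(3)] t(1) t(2)] g(2) by blast
  have 4: "tp (tp y z c) b a \<in> Ip (cls \<alpha>)"
    using prod_in_I[OF dH_add[OF yz d(3)] d(2) d(1) Tr_mult[OF y(1) z(1) t(3)] t(2) t(1)] g(2) by blast
  show ?thesis unfolding e using 1 2 3 4 by (intro vs.span_add vs.span_diff)
qed

lemma NestL:
  assumes y: "y \<in> Tr \<beta>" "dH \<beta>" and c: "c \<in> Tr \<rho>" "\<rho> \<in> cls \<alpha>" and e: "e \<in> Tr (- \<rho>)"
    and w: "w \<in> Tr \<rho>w" "dH \<rho>w" and z: "z \<in> Tr \<delta>" "dH \<delta>"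
  shows "tp (tp y c e) w z \<in> Ip (cls \<alpha>)"
proof (cases "tp y c e = 0")
  case True then show ?thesis by (simp add: vs.span_zero)
next
  case False
  have dr: "dH \<rho>" "dH (- \<rho>)" using c(2) cls_L1 L1_dH dH_neg by auto
  have k: "\<beta> \<in> insert 0 (cls \<alpha>)" using Kc[OF y(2) dr y(1) c(1) e False, of \<rho>] c(2) by simp
  have u: "tp y c e \<in> Tr \<beta>" using Tr_mult[OF y(1) c(1) e] by simp
  show ?thesis
  proof (cases "\<beta> = 0")
    case True
    have "\<rho> \<in> insert 0 (cls \<alpha>)" "- \<rho> \<in> insert 0 (cls \<alpha>)" using c(2) cls_neg by auto
    moreover have "\<beta> + \<rho> + - \<rho> = 0" using True by simp
    ultimately show ?thesis using gen_TT_rv[OF k _ _ _ y(1) c(1) e w z] by blast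
  next
    case False
    then have "\<beta> \<in> cls \<alpha>" using k by simp
    then show ?thesis using prod_in_I[OF y(2) w(2) z(2) u w(1) z(1)] by blast
  qed
qed

lemma gen_mid:
  assumes r: "r1 \<in> insert 0 (cls \<alpha>)" "r2 \<in> insert 0 (cls \<alpha>)" "r3 \<in> insert 0 (cls \<alpha>)" "r1 + r2 + r3 = 0"
    and t: "a \<in> Tr r1" "b \<in> Tr r2" "c \<in> Tr r3"
    and y: "y \<in> Tr \<beta>" "dH \<beta>" and z: "z \<in> Tr \<delta>" "dH \<delta>"
  shows "tp y (tp a b c) z \<in> Ip (cls \<alpha>)"
proof (cases "tp a b c = 0")
  case True then show ?thesis by (simp add: vs.span_zero)
next
  case False
  have g: "r3 \<in> cls \<alpha>" "r1 \<in> cls \<alpha> \<or> r2 \<in> cls \<alpha>" using gen_nz[OF r t False] by auto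
  have d: "dH r1" "dH r2" "dH r3" using r cls_dH by auto
  have e: "tp y (tp a b c) z = tp (tp y a b) c z - tp (tp y b a) c z - tp (tp y c a) b z + tp (tp y c b) a z"
    by (rule ax1)
  have 1: "tp (tp y a b) c z \<in> Ip (cls \<alpha>)"
    using prod_in_I[OF dH_add[OF dH_add[OF y(2) d(1)] d(2)] d(3) z(2) Tr_mult[OF y(1) t(1) t(2)] t(3) z(1)] g(1) by blast
  have 2: "tp (tp y b a) c z \<in> Ip (cls \<alpha>)"
    using prod_in_I[OF dH_add[OF dH_add[OF y(2) d(2)] d(1)] d(3) z(2) Tr_mult[OF y(1) t(2) t(1)] t(3) z(1)] g(1) by blast
  have 3: "tp (tp y c a) b z \<in> Ip (cls \<alpha>)"
  proof (cases "r2 = 0")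
    case False
    then have "r2 \<in> cls \<alpha>" using r(2) by simp
    then show ?thesis
      using prod_in_I[OF dH_add[OF dH_add[OF y(2) d(3)] d(1)] d(2) z(2) Tr_mult[OF y(1) t(3) t(1)] t(2) z(1)] by blast
  next
    case True
    then have "r1 = - r3" using r(4) by (simp add: eq_neg_iff_add_eq_0)
    then have "a \<in> Tr (- r3)" using t(1) by simp
    then show ?thesis using NestL[OF y t(3) g(1) _ t(2) d(2) z] by blast
  qed
  have 4: "tp (tp y c b) a z \<in> Ip (cls \<alpha>)"
  proof (cases "r1 = 0")
    case False
    then have "r1 \<in> cls \<alpha>" using r(1) by simp
    then show ?thesis
      using prod_in_I[OF dH_add[OF dH_add[OF y(2) d(3)] d(2)] d(1) z(2) Tr_mult[OF y(1) t(3) t(2)] t(1) z(1)] by blast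
  next
    case True
    then have "r2 = - r3" using r(4) by (simp add: eq_neg_iff_add_eq_0)
    then have "b \<in> Tr (- r3)" using t(2) by simp
    then show ?thesis using NestL[OF y t(3) g(1) _ t(1) d(1) z] by blast
  qed
  show ?thesis unfolding e using 1 2 3 4 by (intro vs.span_add vs.span_diff)
qed

lemma gen_all:
  assumes g: "g \<in> G0 (cls \<alpha>)"
  shows "tp g a b \<in> Ip (cls \<alpha>) \<and> tp a g b \<in> Ip (cls \<alpha>) \<and> tp a b g \<in> Ip (cls \<alpha>)"
  using g
proof (rule G0E)
  fix a' b' c' r1 r2 r3
  assume h: "g = tp a' b' c'" "r1 \<in> insert 0 (cls \<alpha>)" "r2 \<in> insert 0 (cls \<alpha>)" "r3 \<in> insert 0 (cls \<alpha>)"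
    "r1 + r2 + r3 = 0" "a' \<in> Tr r1" "b' \<in> Tr r2" "c' \<in> Tr r3"
  have 1: "tp g a b \<in> Ip (cls \<alpha>)"
    by (rule rv_all2[where F="\<lambda>a b. tp g a b", OF Ip_sub]) (auto simp: h(1) intro!: gen_TT_rv[OF h(2-8)] rt_dH mh2 mh3)
  have 2: "tp a g b \<in> Ip (cls \<alpha>)"
    by (rule rv_all2[where F="\<lambda>a b. tp a g b", OF Ip_sub]) (auto simp: h(1) intro!: gen_mid[OF h(2-8)] rt_dH mh1 mh3)
  have 3: "tp a b g \<in> Ip (cls \<alpha>)"
    by (rule rv_all2[where F="\<lambda>a b. tp a b g", OF Ip_sub]) (auto simp: h(1) intro!: gen_right_rv[OF h(2-8)] rt_dH mh1 mh2)
  show ?thesis using 1 2 3 by blast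
qed

lemma rv_cls_all:
  assumes x: "x \<in> Tr \<gamma>" "\<gamma> \<in> cls \<alpha>"
  shows "tp x a b \<in> Ip (cls \<alpha>) \<and> tp a x b \<in> Ip (cls \<alpha>) \<and> tp a b x \<in> Ip (cls \<alpha>)"
proof -
  have dg: "dH \<gamma>" using x(2) cls_L1 L1_dH by blast
  have 1: "tp x a b \<in> Ip (cls \<alpha>)"
  proof (rule rv_all2[where F="\<lambda>a b. tp x a b", OF Ip_sub])
    fix \<mu> \<nu> y z assume h: "\<mu> \<in> insert 0 L1" "y \<in> Tr \<mu>" "\<nu> \<in> insert 0 L1" "z \<in> Tr \<nu>"
    show "tp x y z \<in> Ip (cls \<alpha>)" using prod_in_I[OF dg rt_dH[OF h(1)] rt_dH[OF h(3)] x(1) h(2) h(4)] x(2) by blast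
  qed (rule mh2, rule mh3)
  have 2: "tp a x b \<in> Ip (cls \<alpha>)"
  proof (rule rv_all2[where F="\<lambda>a b. tp a x b", OF Ip_sub])
    fix \<mu> \<nu> y z assume h: "\<mu> \<in> insert 0 L1" "y \<in> Tr \<mu>" "\<nu> \<in> insert 0 L1" "z \<in> Tr \<nu>"
    show "tp y x z \<in> Ip (cls \<alpha>)" using prod_in_I[OF rt_dH[OF h(1)] dg rt_dH[OF h(3)] h(2) x(1) h(4)] x(2) by blast
  qed (rule mh1, rule mh3)
  have 3: "tp a b x \<in> Ip (cls \<alpha>)"
  proof (rule rv_all2[where F="\<lambda>a b. tp a b x", OF Ip_sub])
    fix \<mu> \<nu> y z assume h: "\<mu> \<in> insert 0 L1" "y \<in> Tr \<mu>" "\<nu> \<in> insert 0 L1" "z \<in> Tr \<nu>"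
    show "tp y z x \<in> Ip (cls \<alpha>)" using prod_in_I[OF rt_dH[OF h(1)] rt_dH[OF h(3)] dg h(2) h(4) x(1)] x(2) by blast
  qed (rule mh1, rule mh2)
  show ?thesis using 1 2 3 by blast
qed

lemma subspace_tri: "vs.subspace {x. \<forall>a b. tp x a b \<in> M \<and> tp a x b \<in> M \<and> tp a b x \<in> M}" if "vs.subspace M"
  using that unfolding vs.subspace_def by simp

lemma ideal: "is_ideal sc tp (Ipart sc tp H (cls \<alpha>))"
  unfolding is_ideal_def Ipart_eq
proof (intro conjI ballI allI)
  show "vs.subspace (Ip (cls \<alpha>))" by simp
next
  fix x a b assume x: "x \<in> Ip (cls \<alpha>)"
  have "x \<in> {x. \<forall>a b. tp x a b \<in> Ip (cls \<alpha>) \<and> tp a x b \<in> Ip (cls \<alpha>) \<and> tp a b x \<in> Ip (cls \<alpha>)}"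
  proof (rule vs.span_subspace_induct[OF x subspace_tri[OF Ip_sub]])
    fix x assume "x \<in> G0 (cls \<alpha>) \<union> GV (cls \<alpha>)"
    then show "x \<in> {x. \<forall>a b. tp x a b \<in> Ip (cls \<alpha>) \<and> tp a x b \<in> Ip (cls \<alpha>) \<and> tp a b x \<in> Ip (cls \<alpha>)}"
    proof
      assume "x \<in> G0 (cls \<alpha>)" then show ?thesis using gen_all by blast
    next
      assume "x \<in> GV (cls \<alpha>)" then show ?thesis using rv_cls_all unfolding GV_def by blast
    qed
  qed
  then show "tp x a b \<in> Ip (cls \<alpha>)" "tp a x b \<in> Ip (cls \<alpha>)" "tp a b x \<in> Ip (cls \<alpha>)" by auto
qed


section \<open>Orthogonality of different classes\<close>

lemma Z:
  assumes d: "dH r1" "dH r2" "dH r3" and t: "x \<in> Tr r1" "y \<in> Tr r2" "z \<in> Tr r3"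
    and m: "\<mu> \<in> {r1,r2,r3,r1+r2+r3}" "\<mu> \<in> cls \<alpha>" and n: "\<nu> \<in> {r1,r2,r3,r1+r2+r3}" "\<nu> \<in> cls \<alpha>b"
    and ne: "cls \<alpha> \<noteq> cls \<alpha>b"
  shows "tp x y z = 0"
proof (rule ccontr)
  assume nz: "tp x y z \<noteq> 0"
  have "\<nu> \<in> insert 0 (cls \<alpha>)" using Kc[OF d t nz m] n(1) by blast
  moreover have "\<nu> \<noteq> 0" using n(2) cls_L1 L1_nz by blast
  ultimately show False using cls_disj[OF ne] n(2) by blast
qed

lemma InZ:
  assumes x: "x \<in> Tr \<gamma>" "\<gamma> \<in> cls \<alpha>" and b0: "b0 \<in> Tr \<delta>" "dH \<delta>"
    and e: "e \<in> Tr re" "re \<in> insert 0 (cls \<alpha>2)" and w: "w \<in> Tr rw" "dH rw" and z: "z \<in> Tr rz" "rz \<in> cls \<alpha>2"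
    and ne: "cls \<alpha> \<noteq> cls \<alpha>2"
  shows "tp (tp x b0 e) w z = 0 \<and> tp (tp b0 x e) w z = 0"
proof -
  have dg: "dH \<gamma>" using x(2) cls_L1 L1_dH by blast
  have dre: "dH re" using e(2) cls_dH by blast
  have drz: "dH rz" using z(2) cls_L1 L1_dH by blast
  have gL: "\<gamma> \<in> L1" using x(2) cls_L1 by blast
  show ?thesis
  proof (cases "re = 0")
    case False
    then have "re \<in> cls \<alpha>2" using e(2) by simp
    then have "tp x b0 e = 0" "tp b0 x e = 0"
      using Z[OF dg b0(2) dre x(1) b0(1) e(1), of \<gamma> \<alpha> re \<alpha>2] Z[OF b0(2) dg dre b0(1) x(1) e(1), of \<gamma> \<alpha> re \<alpha>2] x(2) ne by auto
    then show ?thesis by simp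
  next
    case re0: True
    have A: "tp (tp x b0 e) w z = 0"
    proof (cases "tp x b0 e = 0")
      case nz: False
      have k: "\<gamma> + \<delta> + re \<in> insert 0 (cls \<alpha>)" using Kc[OF dg b0(2) dre x(1) b0(1) e(1) nz, of \<gamma>] x(2) by blast
      show ?thesis
      proof (cases "\<gamma> + \<delta> + re = 0")
        case True
        then have "\<delta> = - \<gamma>" using re0 by (simp add: eq_neg_iff_add_eq_0 add.commute)
        then have "tp x b0 e = 0" using Tpm0[OF gL x(1)] b0(1) e(1) re0 by simp
        then show ?thesis using nz by simp
      next
        case False
        then have "\<gamma> + \<delta> + re \<in> cls \<alpha>" using k by simp
        then show ?thesis using Z[OF dH_add[OF dH_add[OF dg b0(2)] dre] w(2) drz Tr_mult[OF x(1) b0(1) e(1)] w(1) z(1),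
          of "\<gamma> + \<delta> + re" \<alpha> rz \<alpha>2] z(2) ne by auto
      qed
    qed simp
    have B: "tp (tp b0 x e) w z = 0"
    proof (cases "tp b0 x e = 0")
      case nz: False
      have k: "\<delta> + \<gamma> + re \<in> insert 0 (cls \<alpha>)" using Kc[OF b0(2) dg dre b0(1) x(1) e(1) nz, of \<gamma>] x(2) by blast
      show ?thesis
      proof (cases "\<delta> + \<gamma> + re = 0")
        case True
        then have d: "\<delta> = - \<gamma>" using re0 by (simp add: eq_neg_iff_add_eq_0)
        have "- \<gamma> \<in> L1" using gL by simp
        moreover have "x \<in> Tr (- (- \<gamma>))" using x(1) by simp
        ultimately have "tp b0 x e = 0" using Tpm0[of "- \<gamma>" b0 x e] b0(1) e(1) re0 d by simp
        then show ?thesis using nz by simp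
      next
        case False
        then have "\<delta> + \<gamma> + re \<in> cls \<alpha>" using k by simp
        then show ?thesis using Z[OF dH_add[OF dH_add[OF b0(2) dg] dre] w(2) drz Tr_mult[OF b0(1) x(1) e(1)] w(1) z(1),
          of "\<delta> + \<gamma> + re" \<alpha> rz \<alpha>2] z(2) ne by auto
      qed
    qed simp
    show ?thesis using A B by simp
  qed
qed

lemma ORG:
  assumes x: "x \<in> Tr \<gamma>" "\<gamma> \<in> cls \<alpha>"
    and r: "r1 \<in> insert 0 (cls \<alpha>2)" "r2 \<in> insert 0 (cls \<alpha>2)" "r3 \<in> insert 0 (cls \<alpha>2)" "r1 + r2 + r3 = 0"
    and t: "a \<in> Tr r1" "b \<in> Tr r2" "c \<in> Tr r3"
    and b0: "b0 \<in> Tr \<delta>" "dH \<delta>" and ne: "cls \<alpha> \<noteq> cls \<alpha>2"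
  shows "tp x (tp a b c) b0 = 0 \<and> tp x b0 (tp a b c) = 0 \<and> tp b0 x (tp a b c) = 0"
proof (cases "tp a b c = 0")
  case True then show ?thesis by simp
next
  case False
  have g: "r3 \<in> cls \<alpha>2" "r1 \<in> cls \<alpha>2 \<or> r2 \<in> cls \<alpha>2" using gen_nz[OF r t False] by auto
  have d: "dH r1" "dH r2" "dH r3" using r cls_dH by auto
  have dg: "dH \<gamma>" using x(2) cls_L1 L1_dH by blast
  have zab: "tp x a b = 0" "tp x b a = 0"
    using g(2) Z[OF dg d(1) d(2) x(1) t(1) t(2), of \<gamma> \<alpha> r1 \<alpha>2] Z[OF dg d(1) d(2) x(1) t(1) t(2), of \<gamma> \<alpha> r2 \<alpha>2]
      Z[OF dg d(2) d(1) x(1) t(2) t(1), of \<gamma> \<alpha> r1 \<alpha>2] Z[OF dg d(2) d(1) x(1) t(2) t(1), of \<gamma> \<alpha> r2 \<alpha>2] x(2) ne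
    by auto
  have zca: "tp x c a = 0" "tp x c b = 0"
    using Z[OF dg d(3) d(1) x(1) t(3) t(1), of \<gamma> \<alpha> r3 \<alpha>2] Z[OF dg d(3) d(2) x(1) t(3) t(2), of \<gamma> \<alpha> r3 \<alpha>2] g(1) x(2) ne
    by auto
  have 1: "tp x (tp a b c) b0 = 0"
    unfolding ax1[of x a b c b0] using zab zca by simp
  have zc: "tp x b0 c = 0" "tp b0 x c = 0"
    using Z[OF dg b0(2) d(3) x(1) b0(1) t(3), of \<gamma> \<alpha> r3 \<alpha>2] Z[OF b0(2) dg d(3) b0(1) x(1) t(3), of \<gamma> \<alpha> r3 \<alpha>2] g(1) x(2) ne
    by auto
  have ia: "tp (tp x b0 a) b c = 0 \<and> tp (tp b0 x a) b c = 0"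
    using InZ[OF x b0 t(1) r(1) t(2) d(2) t(3) g(1) ne] .
  have ib: "tp (tp x b0 b) a c = 0 \<and> tp (tp b0 x b) a c = 0"
    using InZ[OF x b0 t(2) r(2) t(1) d(1) t(3) g(1) ne] .
  have 2: "tp x b0 (tp a b c) = 0"
    unfolding ax2[of x b0 a b c] using ia ib zc by simp
  have 3: "tp b0 x (tp a b c) = 0"
    unfolding ax2[of b0 x a b c] using ia ib zc by simp
  show ?thesis using 1 2 3 by simp
qed

lemma OGR2:
  assumes r: "r1 \<in> insert 0 (cls \<alpha>)" "r2 \<in> insert 0 (cls \<alpha>)" "r3 \<in> insert 0 (cls \<alpha>)" "r1 + r2 + r3 = 0"
    and t: "a \<in> Tr r1" "b \<in> Tr r2" "c \<in> Tr r3"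
    and y: "y \<in> Tr \<epsilon>" "\<epsilon> \<in> cls \<alpha>2"
    and b0: "b0 \<in> Tr \<delta>" "dH \<delta>" and ne: "cls \<alpha> \<noteq> cls \<alpha>2"
  shows "tp (tp a b c) y b0 = 0 \<and> tp (tp a b c) b0 y = 0"
proof (cases "tp a b c = 0")
  case True then show ?thesis by simp
next
  case False
  have g: "r3 \<in> cls \<alpha>" "r1 \<in> cls \<alpha> \<or> r2 \<in> cls \<alpha>" using gen_nz[OF r t False] by auto
  have d: "dH r1" "dH r2" "dH r3" using r cls_dH by auto
  have de: "dH \<epsilon>" using y(2) cls_L1 L1_dH by blast
  have z1: "tp c y b0 = 0" "tp c b0 y = 0"
    using Z[OF d(3) de b0(2) t(3) y(1) b0(1), of r3 \<alpha> \<epsilon> \<alpha>2] Z[OF d(3) b0(2) de t(3) b0(1) y(1), of r3 \<alpha> \<epsilon> \<alpha>2] g(1) y(2) ne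
    by auto
  have z2: "tp a b y = 0"
    using g(2) Z[OF d(1) d(2) de t(1) t(2) y(1), of r1 \<alpha> \<epsilon> \<alpha>2] Z[OF d(1) d(2) de t(1) t(2) y(1), of r2 \<alpha> \<epsilon> \<alpha>2] y(2) ne
    by auto
  have da: "dH (r1 + r2 + \<delta>)" using dH_add d b0(2) by blast
  have z3: "tp (tp a b b0) c y = 0" "tp (tp a b b0) y c = 0"
    using Z[OF da d(3) de Tr_mult[OF t(1,2) b0(1)] t(3) y(1), of r3 \<alpha> \<epsilon> \<alpha>2]
      Z[OF da de d(3) Tr_mult[OF t(1,2) b0(1)] y(1) t(3), of r3 \<alpha> \<epsilon> \<alpha>2] g(1) y(2) ne
    by auto
  have e1: "tp (tp a b c) y b0 = tp a b (tp c y b0) + tp (tp a b y) c b0 + tp (tp a b b0) c y - tp (tp a b b0) y c"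
    by (simp add: ax2 algebra_simps)
  have e2: "tp (tp a b c) b0 y = tp a b (tp c b0 y) + tp (tp a b b0) c y + tp (tp a b y) c b0 - tp (tp a b y) b0 c"
    by (simp add: ax2 algebra_simps)
  show ?thesis unfolding e1 e2 using z1 z2 z3 by simp
qed

lemma NestZ:
  assumes b0: "b0 \<in> Tr \<delta>" "dH \<delta>" and c: "c \<in> Tr \<rho>" "\<rho> \<in> cls \<alpha>" and e: "e \<in> Tr (- \<rho>)"
    and w: "w \<in> Tr 0" and y: "y \<in> Tr \<epsilon>" "\<epsilon> \<in> cls \<alpha>2" and ne: "cls \<alpha> \<noteq> cls \<alpha>2"
  shows "tp (tp b0 c e) w y = 0"
proof (cases "tp b0 c e = 0")
  case True then show ?thesis by simp
next
  case False
  have dr: "dH \<rho>" "dH (- \<rho>)" using c(2) cls_L1 L1_dH dH_neg by auto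
  have de: "dH \<epsilon>" using y(2) cls_L1 L1_dH by blast
  have k: "\<delta> \<in> insert 0 (cls \<alpha>)" using Kc[OF b0(2) dr b0(1) c(1) e False, of \<rho>] c(2) by simp
  have u: "tp b0 c e \<in> Tr \<delta>" using Tr_mult[OF b0(1) c(1) e] by simp
  show ?thesis
  proof (cases "\<delta> = 0")
    case True
    have "\<rho> \<in> insert 0 (cls \<alpha>)" "- \<rho> \<in> insert 0 (cls \<alpha>)" using c(2) cls_neg by auto
    moreover have "\<delta> + \<rho> + - \<rho> = 0" using True by simp
    ultimately show ?thesis using OGR2[OF k _ _ _ b0(1) c(1) e y w dH_0 ne] by blast
  next
    case False
    then have "\<delta> \<in> cls \<alpha>" using k by simp
    then show ?thesis using Z[OF b0(2) dH_0 de u w y(1), of \<delta> \<alpha> \<epsilon> \<alpha>2] y(2) ne by auto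
  qed
qed

lemma OGR3:
  assumes r: "r1 \<in> insert 0 (cls \<alpha>)" "r2 \<in> insert 0 (cls \<alpha>)" "r3 \<in> insert 0 (cls \<alpha>)" "r1 + r2 + r3 = 0"
    and t: "a \<in> Tr r1" "b \<in> Tr r2" "c \<in> Tr r3"
    and y: "y \<in> Tr \<epsilon>" "\<epsilon> \<in> cls \<alpha>2"
    and b0: "b0 \<in> Tr \<delta>" "dH \<delta>" and ne: "cls \<alpha> \<noteq> cls \<alpha>2"
  shows "tp b0 (tp a b c) y = 0"
proof (cases "tp a b c = 0")
  case True then show ?thesis by simp
next
  case False
  have g: "r3 \<in> cls \<alpha>" "r1 \<in> cls \<alpha> \<or> r2 \<in> cls \<alpha>" using gen_nz[OF r t False] by auto
  have d: "dH r1" "dH r2" "dH r3" using r cls_dH by auto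
  have de: "dH \<epsilon>" using y(2) cls_L1 L1_dH by blast
  have z12: "tp (tp b0 a b) c y = 0" "tp (tp b0 b a) c y = 0"
    using Z[OF dH_add[OF dH_add[OF b0(2) d(1)] d(2)] d(3) de Tr_mult[OF b0(1) t(1) t(2)] t(3) y(1), of r3 \<alpha> \<epsilon> \<alpha>2]
      Z[OF dH_add[OF dH_add[OF b0(2) d(2)] d(1)] d(3) de Tr_mult[OF b0(1) t(2) t(1)] t(3) y(1), of r3 \<alpha> \<epsilon> \<alpha>2]
      g(1) y(2) ne by auto
  have z3: "tp (tp b0 c a) b y = 0"
  proof (cases "r2 = 0")
    case False
    then have "r2 \<in> cls \<alpha>" using r(2) by simp
    then show ?thesis
      using Z[OF dH_add[OF dH_add[OF b0(2) d(3)] d(1)] d(2) de Tr_mult[OF b0(1) t(3) t(1)] t(2) y(1), of r2 \<alpha> \<epsilon> \<alpha>2]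
        y(2) ne by auto
  next
    case True
    then have "r1 = - r3" using r(4) by (simp add: eq_neg_iff_add_eq_0)
    then have "a \<in> Tr (- r3)" using t(1) by simp
    then show ?thesis using NestZ[OF b0 t(3) g(1) _ _ y ne] t(2) True by simp
  qed
  have z4: "tp (tp b0 c b) a y = 0"
  proof (cases "r1 = 0")
    case False
    then have "r1 \<in> cls \<alpha>" using r(1) by simp
    then show ?thesis
      using Z[OF dH_add[OF dH_add[OF b0(2) d(3)] d(2)] d(1) de Tr_mult[OF b0(1) t(3) t(2)] t(1) y(1), of r1 \<alpha> \<epsilon> \<alpha>2]
        y(2) ne by auto
  next
    case True
    then have "r2 = - r3" using r(4) by (simp add: eq_neg_iff_add_eq_0)
    then have "b \<in> Tr (- r3)" using t(2) by simp
    then show ?thesis using NestZ[OF b0 t(3) g(1) _ _ y ne] t(1) True by simp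
  qed
  show ?thesis unfolding ax1[of b0 a b c y] using z12 z3 z4 by simp
qed


lemma subK1: "vs.subspace {x. \<forall>b. tp x y b = 0 \<and> tp x b y = 0 \<and> tp b x y = 0}"
  by (simp add: vs.subspace_def)
lemma subK2: "vs.subspace {w. \<forall>b. tp x w b = 0 \<and> tp x b w = 0 \<and> tp b x w = 0}"
  by (simp add: vs.subspace_def)

lemma rv_zero:
  assumes f: "module_hom sc sc f" and r: "\<And>\<mu> x. \<mu> \<in> insert 0 L1 \<Longrightarrow> x \<in> Tr \<mu> \<Longrightarrow> f x = 0"
  shows "f a = 0"
  using rv_all[OF vs.subspace_single_0 f, of a] r by blast

lemma RR:
  assumes x: "x \<in> Tr \<gamma>" "\<gamma> \<in> cls \<alpha>" and y: "y \<in> Tr \<epsilon>" "\<epsilon> \<in> cls \<alpha>2" and ne: "cls \<alpha> \<noteq> cls \<alpha>2"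
  shows "tp x y b = 0 \<and> tp x b y = 0 \<and> tp b x y = 0"
proof -
  have dg: "dH \<gamma>" using x(2) cls_L1 L1_dH by blast
  have de: "dH \<epsilon>" using y(2) cls_L1 L1_dH by blast
  have 1: "tp x y b = 0"
    by (rule rv_zero[where f="\<lambda>b. tp x y b", OF mh3]) (use Z[where \<mu>=\<gamma> and \<alpha>=\<alpha> and \<nu>=\<epsilon> and \<alpha>b=\<alpha>2, OF dg de rt_dH x(1) y(1)] x(2) y(2) ne in auto)
  have 2: "tp x b y = 0"
    by (rule rv_zero[where f="\<lambda>b. tp x b y", OF mh2]) (use Z[where \<mu>=\<gamma> and \<alpha>=\<alpha> and \<nu>=\<epsilon> and \<alpha>b=\<alpha>2, OF dg rt_dH de x(1) _ y(1)] x(2) y(2) ne in auto)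
  have 3: "tp b x y = 0"
    by (rule rv_zero[where f="\<lambda>b. tp b x y", OF mh1]) (use Z[where \<mu>=\<gamma> and \<alpha>=\<alpha> and \<nu>=\<epsilon> and \<alpha>b=\<alpha>2, OF rt_dH dg de _ x(1) y(1)] x(2) y(2) ne in auto)
  show ?thesis using 1 2 3 by blast
qed

lemma OA:
  assumes x: "x \<in> Ip (cls \<alpha>)" and y: "y \<in> Tr \<epsilon>" "\<epsilon> \<in> cls \<alpha>2" and ne: "cls \<alpha> \<noteq> cls \<alpha>2"
  shows "tp x y b = 0 \<and> tp x b y = 0 \<and> tp b x y = 0"
proof -
  have "x \<in> {x. \<forall>b. tp x y b = 0 \<and> tp x b y = 0 \<and> tp b x y = 0}"
  proof (rule vs.span_subspace_induct[OF x subK1])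
    fix x assume "x \<in> G0 (cls \<alpha>) \<union> GV (cls \<alpha>)"
    then show "x \<in> {x. \<forall>b. tp x y b = 0 \<and> tp x b y = 0 \<and> tp b x y = 0}"
    proof
      assume "x \<in> GV (cls \<alpha>)"
      then obtain \<gamma> where "\<gamma> \<in> cls \<alpha>" "x \<in> Tr \<gamma>" unfolding GV_def by blast
      then show ?thesis using RR y ne by blast
    next
      assume "x \<in> G0 (cls \<alpha>)"
      then show ?thesis
      proof (rule G0E)
        fix a b c r1 r2 r3
        assume h: "x = tp a b c" "r1 \<in> insert 0 (cls \<alpha>)" "r2 \<in> insert 0 (cls \<alpha>)" "r3 \<in> insert 0 (cls \<alpha>)"
          "r1 + r2 + r3 = 0" "a \<in> Tr r1" "b \<in> Tr r2" "c \<in> Tr r3"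
        have 1: "tp x y b0 = 0" for b0
          by (rule rv_zero[where f="\<lambda>b0. tp x y b0", OF mh3]) (use OGR2[OF h(2-8) y _ rt_dH ne] h(1) in auto)
        have 2: "tp x b0 y = 0" for b0
          by (rule rv_zero[where f="\<lambda>b0. tp x b0 y", OF mh2]) (use OGR2[OF h(2-8) y _ rt_dH ne] h(1) in auto)
        have 3: "tp b0 x y = 0" for b0
          by (rule rv_zero[where f="\<lambda>b0. tp b0 x y", OF mh1]) (use OGR3[OF h(2-8) y _ rt_dH ne] h(1) in auto)
        show ?thesis using 1 2 3 by blast
      qed
    qed
  qed
  then show ?thesis by blast
qed

lemma OB:
  assumes x: "x \<in> Tr \<gamma>" "\<gamma> \<in> cls \<alpha>" and w: "w \<in> Ip (cls \<alpha>2)" and ne: "cls \<alpha> \<noteq> cls \<alpha>2"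
  shows "tp x w b = 0 \<and> tp x b w = 0 \<and> tp b x w = 0"
proof -
  have "w \<in> {w. \<forall>b. tp x w b = 0 \<and> tp x b w = 0 \<and> tp b x w = 0}"
  proof (rule vs.span_subspace_induct[OF w subK2])
    fix w assume "w \<in> G0 (cls \<alpha>2) \<union> GV (cls \<alpha>2)"
    then show "w \<in> {w. \<forall>b. tp x w b = 0 \<and> tp x b w = 0 \<and> tp b x w = 0}"
    proof
      assume "w \<in> GV (cls \<alpha>2)"
      then obtain \<epsilon> where "\<epsilon> \<in> cls \<alpha>2" "w \<in> Tr \<epsilon>" unfolding GV_def by blast
      then show ?thesis using RR x ne by blast
    next
      assume "w \<in> G0 (cls \<alpha>2)"
      then show ?thesis
      proof (rule G0E)
        fix a b c r1 r2 r3
        assume h: "w = tp a b c" "r1 \<in> insert 0 (cls \<alpha>2)" "r2 \<in> insert 0 (cls \<alpha>2)" "r3 \<in> insert 0 (cls \<alpha>2)"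
          "r1 + r2 + r3 = 0" "a \<in> Tr r1" "b \<in> Tr r2" "c \<in> Tr r3"
        have 1: "tp x w b0 = 0" for b0
          by (rule rv_zero[where f="\<lambda>b0. tp x w b0", OF mh3]) (use ORG[OF x h(2-8) _ rt_dH ne] h(1) in auto)
        have 2: "tp x b0 w = 0" for b0
          by (rule rv_zero[where f="\<lambda>b0. tp x b0 w", OF mh2]) (use ORG[OF x h(2-8) _ rt_dH ne] h(1) in auto)
        have 3: "tp b0 x w = 0" for b0
          by (rule rv_zero[where f="\<lambda>b0. tp b0 x w", OF mh1]) (use ORG[OF x h(2-8) _ rt_dH ne] h(1) in auto)
        show ?thesis using 1 2 3 by blast
      qed
    qed
  qed
  then show ?thesis by blast
qed


lemma OGG:
  assumes r: "r1 \<in> insert 0 (cls \<alpha>)" "r2 \<in> insert 0 (cls \<alpha>)" "r3 \<in> insert 0 (cls \<alpha>)" "r1 + r2 + r3 = 0"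
    and t: "a \<in> Tr r1" "b \<in> Tr r2" "c \<in> Tr r3"
    and s: "s1 \<in> insert 0 (cls \<alpha>2)" "s2 \<in> insert 0 (cls \<alpha>2)" "s3 \<in> insert 0 (cls \<alpha>2)" "s1 + s2 + s3 = 0"
    and t': "a' \<in> Tr s1" "b' \<in> Tr s2" "c' \<in> Tr s3"
    and ne: "cls \<alpha> \<noteq> cls \<alpha>2"
  shows "tp (tp a b c) (tp a' b' c') b0 = 0 \<and> tp (tp a b c) b0 (tp a' b' c') = 0 \<and> tp b0 (tp a b c) (tp a' b' c') = 0"
proof (cases "tp a' b' c' = 0")
  case True then show ?thesis by simp
next
  case False
  have g: "s3 \<in> cls \<alpha>2" using gen_nz[OF s t' False] by auto
  define G where "G = tp a b c"
  have G0: "G \<in> G0 (cls \<alpha>)" unfolding G_def by (rule G0I[OF r t])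
  then have GI: "G \<in> Ip (cls \<alpha>)" by (intro vs.span_base) simp
  have uI: "tp G p q \<in> Ip (cls \<alpha>)" "tp p G q \<in> Ip (cls \<alpha>)" for p q using gen_all[OF G0] by auto
  have OAc: "tp u c' p = 0 \<and> tp u p c' = 0 \<and> tp p u c' = 0" if "u \<in> Ip (cls \<alpha>)" for u p
    using OA[OF that t'(3) g ne] .
  have 1: "tp G (tp a' b' c') b0 = 0"
    unfolding ax1[of G a' b' c' b0] using OAc[OF uI(1)] OAc[OF GI] by simp
  have 2: "tp G b0 (tp a' b' c') = 0"
    unfolding ax2[of G b0 a' b' c'] using OAc[OF uI(1)] OAc[OF GI] by simp
  have 3: "tp b0 G (tp a' b' c') = 0"
    unfolding ax2[of b0 G a' b' c'] using OAc[OF uI(2)] OAc[OF GI] by simp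
  show ?thesis using 1 2 3 unfolding G_def by simp
qed

lemma Orth:
  assumes x: "x \<in> Ip (cls \<alpha>)" and w: "w \<in> Ip (cls \<alpha>2)" and ne: "cls \<alpha> \<noteq> cls \<alpha>2"
  shows "tp x w b = 0 \<and> tp x b w = 0 \<and> tp b x w = 0"
proof -
  have "x \<in> {x. \<forall>b. tp x w b = 0 \<and> tp x b w = 0 \<and> tp b x w = 0}"
  proof (rule vs.span_subspace_induct[OF x subK1])
    fix x assume "x \<in> G0 (cls \<alpha>) \<union> GV (cls \<alpha>)"
    then show "x \<in> {x. \<forall>b. tp x w b = 0 \<and> tp x b w = 0 \<and> tp b x w = 0}"
    proof
      assume "x \<in> GV (cls \<alpha>)"
      then obtain \<gamma> where "\<gamma> \<in> cls \<alpha>" "x \<in> Tr \<gamma>" unfolding GV_def by blast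
      then show ?thesis using OB w ne by blast
    next
      assume xg: "x \<in> G0 (cls \<alpha>)"
      then have xI: "x \<in> Ip (cls \<alpha>)" by (intro vs.span_base) simp
      have "w \<in> {w. \<forall>b. tp x w b = 0 \<and> tp x b w = 0 \<and> tp b x w = 0}"
      proof (rule vs.span_subspace_induct[OF w subK2])
        fix w assume "w \<in> G0 (cls \<alpha>2) \<union> GV (cls \<alpha>2)"
        then show "w \<in> {w. \<forall>b. tp x w b = 0 \<and> tp x b w = 0 \<and> tp b x w = 0}"
        proof
          assume "w \<in> GV (cls \<alpha>2)"
          then obtain \<epsilon> where "\<epsilon> \<in> cls \<alpha>2" "w \<in> Tr \<epsilon>" unfolding GV_def by blast
          then show ?thesis using OA[OF xI] ne by blast
        next
          assume "w \<in> G0 (cls \<alpha>2)"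
          then show ?thesis
          proof (rule G0E)
            fix a' b' c' s1 s2 s3
            assume h': "w = tp a' b' c'" "s1 \<in> insert 0 (cls \<alpha>2)" "s2 \<in> insert 0 (cls \<alpha>2)" "s3 \<in> insert 0 (cls \<alpha>2)"
              "s1 + s2 + s3 = 0" "a' \<in> Tr s1" "b' \<in> Tr s2" "c' \<in> Tr s3"
            from xg show ?thesis
            proof (rule G0E)
              fix a b c r1 r2 r3
              assume h: "x = tp a b c" "r1 \<in> insert 0 (cls \<alpha>)" "r2 \<in> insert 0 (cls \<alpha>)" "r3 \<in> insert 0 (cls \<alpha>)"
                "r1 + r2 + r3 = 0" "a \<in> Tr r1" "b \<in> Tr r2" "c \<in> Tr r3"
              show ?thesis using OGG[OF h(2-8) h'(2-8) ne] h(1) h'(1) by blast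
            qed
          qed
        qed
      qed
      then show ?thesis by blast
    qed
  qed
  then show ?thesis by blast
qed


section \<open>Direct sums\<close>

definition SS :: "'i set \<Rightarrow> ('i \<Rightarrow> 'v set) \<Rightarrow> 'v set" where
  "SS I V = {x. \<exists>F f. finite F \<and> F \<subseteq> I \<and> (\<forall>i\<in>F. f i \<in> V i) \<and> x = (\<Sum>i\<in>F. f i)}"

lemma SS_mem: "i \<in> I \<Longrightarrow> x \<in> V i \<Longrightarrow> x \<in> SS I V"
  unfolding SS_def by (intro CollectI exI[of _ "{i}"] exI[of _ "\<lambda>_. x"]) simp

lemma SS_sub:
  assumes V: "\<And>i. i \<in> I \<Longrightarrow> vs.subspace (V i)"
  shows "vs.subspace (SS I V)"
  unfolding vs.subspace_def
proof (intro conjI ballI allI)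
  show "0 \<in> SS I V" unfolding SS_def by (intro CollectI exI[of _ "{}"]) simp
next
  fix x y assume x: "x \<in> SS I V" and y: "y \<in> SS I V"
  obtain F f where F: "finite F" "F \<subseteq> I" "\<forall>i\<in>F. f i \<in> V i" "x = (\<Sum>i\<in>F. f i)"
    using x unfolding SS_def by blast
  obtain G g where G: "finite G" "G \<subseteq> I" "\<forall>i\<in>G. g i \<in> V i" "y = (\<Sum>i\<in>G. g i)"
    using y unfolding SS_def by blast
  define h where "h i = (if i \<in> F then f i else 0) + (if i \<in> G then g i else 0)" for i
  have "(\<Sum>i\<in>F \<union> G. h i) = (\<Sum>i\<in>F \<union> G. (if i \<in> F then f i else 0)) + (\<Sum>i\<in>F \<union> G. (if i \<in> G then g i else 0))"
    unfolding h_def by (rule sum.distrib)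
  also have "\<dots> = x + y"
  proof -
    have fin: "finite (F \<union> G)" using F(1) G(1) by simp
    have a: "(\<Sum>i\<in>F \<union> G. (if i \<in> F then f i else 0)) = sum f ((F \<union> G) \<inter> F)"
      by (rule sum.inter_restrict[OF fin, symmetric])
    have b: "(\<Sum>i\<in>F \<union> G. (if i \<in> G then g i else 0)) = sum g ((F \<union> G) \<inter> G)"
      by (rule sum.inter_restrict[OF fin, symmetric])
    have c: "(F \<union> G) \<inter> F = F" "(F \<union> G) \<inter> G = G" by blast+
    show ?thesis unfolding a b c F(4) G(4) ..
  qed
  finally have e: "x + y = (\<Sum>i\<in>F \<union> G. h i)" by simp
  have "\<forall>i\<in>F \<union> G. h i \<in> V i"
  proof
    fix i assume i: "i \<in> F \<union> G"
    then have sv: "vs.subspace (V i)" using F G V by blast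
    show "h i \<in> V i" unfolding h_def
      using F(3) G(3) i vs.subspace_add[OF sv] vs.subspace_0[OF sv] by auto
  qed
  then show "x + y \<in> SS I V" unfolding SS_def using F G e by (intro CollectI exI[of _ "F \<union> G"] exI[of _ h]) auto
next
  fix c x assume x: "x \<in> SS I V"
  obtain F f where F: "finite F" "F \<subseteq> I" "\<forall>i\<in>F. f i \<in> V i" "x = (\<Sum>i\<in>F. f i)"
    using x unfolding SS_def by blast
  have e: "sc c x = (\<Sum>i\<in>F. sc c (f i))" using F(4) vs.scale_sum_right by simp
  have "\<forall>i\<in>F. sc c (f i) \<in> V i" using F V vs.subspace_scale by blast
  then show "sc c x \<in> SS I V" unfolding SS_def using F e by (intro CollectI exI[of _ F] exI[of _ "\<lambda>i. sc c (f i)"]) auto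
qed

lemma G0_Tr0: "vs.span (G0 \<Lambda>) \<subseteq> Tr 0"
proof (rule vs.span_minimal[OF _ Tr_sub])
  show "G0 \<Lambda> \<subseteq> Tr 0"
  proof
    fix g assume "g \<in> G0 \<Lambda>"
    then show "g \<in> Tr 0"
    proof (rule G0E)
      fix a b c r1 r2 r3 assume h: "g = tp a b c" "r1 + r2 + r3 = 0" "a \<in> Tr r1" "b \<in> Tr r2" "c \<in> Tr r3"
      show "g \<in> Tr 0" using Tr_mult[OF h(3-5)] h(1,2) by simp
    qed
  qed
qed

lemma T0V: "T0part sc tp H (cls \<alpha>) \<inter> Vpart sc tp H (cls \<alpha>) = {0}"
proof
  show "{0} \<subseteq> T0part sc tp H (cls \<alpha>) \<inter> Vpart sc tp H (cls \<alpha>)"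
    by (simp add: T0part_eq Vpart_eq vs.span_zero)
next
  show "T0part sc tp H (cls \<alpha>) \<inter> Vpart sc tp H (cls \<alpha>) \<subseteq> {0}"
  proof
    fix x assume "x \<in> T0part sc tp H (cls \<alpha>) \<inter> Vpart sc tp H (cls \<alpha>)"
    then have x0: "x \<in> Tr 0" and xv: "x \<in> vs.span (GV (cls \<alpha>))"
      using G0_Tr0 by (auto simp: T0part_eq Vpart_eq)
    have "vs.span (GV (cls \<alpha>)) \<subseteq> SS (cls \<alpha>) Tr"
      by (rule vs.span_minimal) (auto simp: GV_def intro: SS_mem SS_sub Tr_sub)
    then obtain F f where F: "finite F" "F \<subseteq> cls \<alpha>" "\<forall>i\<in>F. f i \<in> Tr i" "x = (\<Sum>i\<in>F. f i)"
      using xv unfolding SS_def by blast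
    have nF: "0 \<notin> F" using F(2) cls_L1 L1_nz by blast
    define g where "g = f(0 := - x)"
    have e1: "(\<Sum>i\<in>insert 0 F. g i) = g 0 + (\<Sum>i\<in>F. g i)" by (rule sum.insert[OF F(1) nF])
    have e2: "(\<Sum>i\<in>F. g i) = (\<Sum>i\<in>F. f i)" using nF unfolding g_def by (intro sum.cong) auto
    have e3: "g 0 = - x" by (simp add: g_def)
    have s0: "(\<Sum>i\<in>insert 0 F. g i) = 0" unfolding e1 e2 e3 F(4)[symmetric] by simp
    have sub: "insert 0 F \<subseteq> insert 0 L1" using F(2) cls_L1 by blast
    have "\<forall>i\<in>insert 0 F. g i \<in> Tr i" using F(3) x0 Tr_neg nF by (auto simp: g_def)
    then have "g 0 = 0" using uniq[OF _ sub _ s0] F(1) by blast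
    then show "x \<in> {0}" by (simp add: g_def)
  qed
qed

lemma rv_all3:
  assumes M: "vs.subspace M"
    and r: "\<And>\<mu> \<nu> \<rho> x y z. \<mu> \<in> insert 0 L1 \<Longrightarrow> x \<in> Tr \<mu> \<Longrightarrow> \<nu> \<in> insert 0 L1 \<Longrightarrow> y \<in> Tr \<nu>
       \<Longrightarrow> \<rho> \<in> insert 0 L1 \<Longrightarrow> z \<in> Tr \<rho> \<Longrightarrow> tp x y z \<in> M"
  shows "tp a b c \<in> M"
proof (rule rv_all2[where F="\<lambda>a b. tp a b c", OF M])
  fix \<mu> \<nu> x y assume h: "\<mu> \<in> insert 0 L1" "x \<in> Tr \<mu>" "\<nu> \<in> insert 0 L1" "y \<in> Tr \<nu>"
  show "tp x y c \<in> M" by (rule rv_all[where f="\<lambda>c. tp x y c", OF M mh3]) (rule r[OF h])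
qed (rule mh1, rule mh2)

lemma cover:
  assumes sp: "vs.span {tp a b c | a b c. True} = UNIV"
  shows "x \<in> SS (cls ` L1) Ip"
proof -
  have M: "vs.subspace (SS (cls ` L1) Ip)" by (rule SS_sub) simp
  have "tp a b c \<in> SS (cls ` L1) Ip" for a b c
  proof (rule rv_all3[OF M])
    fix \<mu> \<nu> \<rho> x y z assume h: "\<mu> \<in> insert 0 L1" "x \<in> Tr \<mu>" "\<nu> \<in> insert 0 L1" "y \<in> Tr \<nu>"
       "\<rho> \<in> insert 0 L1" "z \<in> Tr \<rho>"
    show "tp x y z \<in> SS (cls ` L1) Ip"
    proof (cases "tp x y z = 0")
      case True then show ?thesis using vs.subspace_0[OF M] by simp
    next
      case False
      have "\<exists>m\<in>{\<mu>,\<nu>,\<rho>}. m \<noteq> 0" using False T00 h by auto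
      then obtain m where m: "m \<in> {\<mu>,\<nu>,\<rho>}" "m \<noteq> 0" by blast
      then have mL: "m \<in> L1" using h by auto
      have "tp x y z \<in> Ip (cls m)"
        using prod_in_I[OF rt_dH[OF h(1)] rt_dH[OF h(3)] rt_dH[OF h(5)] h(2) h(4) h(6), of m] self_cls[OF mL] m(1) by blast
      then show ?thesis using mL by (intro SS_mem) auto
    qed
  qed
  then have "{tp a b c | a b c. True} \<subseteq> SS (cls ` L1) Ip" by blast
  then have "vs.span {tp a b c | a b c. True} \<subseteq> SS (cls ` L1) Ip" by (rule vs.span_minimal[OF _ M])
  then show ?thesis using sp by blast
qed

lemma indep:
  assumes sp: "vs.span {tp a b c | a b c. True} = UNIV" and ann: "Ann tp = {0}"
    and F: "finite F" "F \<subseteq> cls ` L1" "\<forall>C\<in>F. f C \<in> Ip C" "(\<Sum>C\<in>F. f C) = 0" and C0: "C0 \<in> F"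
  shows "f C0 = 0"
proof -
  obtain \<alpha>0 where a0: "C0 = cls \<alpha>0" using F(2) C0 by blast
  have t0I: "f C0 \<in> Ip C0" using F(3) C0 by blast
  have "(\<Sum>C\<in>F. f C) = f C0 + (\<Sum>C\<in>F - {C0}. f C)" using F(1) C0 by (rule sum.remove)
  then have t0: "f C0 = - (\<Sum>C\<in>F - {C0}. f C)" using F(4) by (simp add: eq_neg_iff_add_eq_0)
  have key: "tp (f C0) u b = 0 \<and> tp u (f C0) b = 0 \<and> tp u b (f C0) = 0" if D: "D \<in> cls ` L1" "u \<in> Ip D" for D u b
  proof -
    obtain \<beta> where b: "D = cls \<beta>" using D(1) by blast
    show ?thesis
    proof (cases "D = C0")
      case False
      have "tp (f C0) u b = 0" using Orth[OF t0I[unfolded a0] D(2)[unfolded b]] False a0 b by blast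
      moreover have "tp u (f C0) b = 0 \<and> tp u b (f C0) = 0" using Orth[OF D(2)[unfolded b] t0I[unfolded a0]] False a0 b by blast
      ultimately show ?thesis by blast
    next
      case True
      have o: "tp (f C) u b = 0 \<and> tp u (f C) b = 0 \<and> tp u b (f C) = 0" if C: "C \<in> F - {C0}" for C
      proof -
        obtain \<gamma> where g: "C = cls \<gamma>" using C F(2) by blast
        have fC: "f C \<in> Ip (cls \<gamma>)" using F(3) C g by blast
        have ne: "cls \<gamma> \<noteq> cls \<alpha>0" using C g a0 by blast
        have uI: "u \<in> Ip (cls \<alpha>0)" using D(2) True a0 by simp
        have A: "tp (f C) u b = 0" using Orth[OF fC uI ne] by blast
        have B: "tp u (f C) b = 0 \<and> tp u b (f C) = 0" using Orth[OF uI fC not_sym[OF ne]] by blast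
        show ?thesis using A B by blast
      qed
      have s1: "tp (\<Sum>C\<in>F - {C0}. f C) u b = (\<Sum>C\<in>F - {C0}. tp (f C) u b)"
        using module_hom.sum[OF mh1[of u b]] by simp
      have s2: "tp u (\<Sum>C\<in>F - {C0}. f C) b = (\<Sum>C\<in>F - {C0}. tp u (f C) b)"
        using module_hom.sum[OF mh2[of u b]] by simp
      have s3: "tp u b (\<Sum>C\<in>F - {C0}. f C) = (\<Sum>C\<in>F - {C0}. tp u b (f C))"
        using module_hom.sum[OF mh3[of u b]] by simp
      show ?thesis unfolding t0 using s1 s2 s3 o by simp
    qed
  qed
  have dec2: "\<exists>G h. finite G \<and> G \<subseteq> cls ` L1 \<and> (\<forall>D\<in>G. h D \<in> Ip D) \<and> a = (\<Sum>D\<in>G. h D)" for a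
    using cover[OF sp, of a] unfolding SS_def by blast
  have "f C0 \<in> Ann tp" unfolding Ann_def
  proof (intro CollectI allI)
    fix a b
    obtain G h where G: "finite G" "G \<subseteq> cls ` L1" "\<forall>D\<in>G. h D \<in> Ip D" "a = (\<Sum>D\<in>G. h D)"
      using dec2[of a] by blast
    have 1: "tp (f C0) a b = 0"
    proof -
      have "tp (f C0) a b = (\<Sum>D\<in>G. tp (f C0) (h D) b)" unfolding G(4) using module_hom.sum[OF mh2[of "f C0" b]] by simp
      also have "\<dots> = 0"
      proof (rule sum.neutral, rule ballI)
        fix D assume "D \<in> G"
        then have "D \<in> cls ` L1" "h D \<in> Ip D" using G(2,3) by auto
        then show "tp (f C0) (h D) b = 0" using key by blast
      qed
      finally show ?thesis .
    qed
    have 2: "tp a (f C0) b = 0"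
    proof -
      have "tp a (f C0) b = (\<Sum>D\<in>G. tp (h D) (f C0) b)" unfolding G(4) using module_hom.sum[OF mh1[of "f C0" b]] by simp
      also have "\<dots> = 0"
      proof (rule sum.neutral, rule ballI)
        fix D assume "D \<in> G"
        then have "D \<in> cls ` L1" "h D \<in> Ip D" using G(2,3) by auto
        then show "tp (h D) (f C0) b = 0" using key by blast
      qed
      finally show ?thesis .
    qed
    have 3: "tp a b (f C0) = 0"
    proof -
      have "tp a b (f C0) = (\<Sum>D\<in>G. tp (h D) b (f C0))" unfolding G(4) using module_hom.sum[OF mh1[of b "f C0"]] by simp
      also have "\<dots> = 0"
      proof (rule sum.neutral, rule ballI)
        fix D assume "D \<in> G"
        then have "D \<in> cls ` L1" "h D \<in> Ip D" using G(2,3) by auto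
        then show "tp (h D) b (f C0) = 0" using key by blast
      qed
      finally show ?thesis .
    qed
    show "tp (f C0) a b = 0 \<and> tp a (f C0) b = 0 \<and> tp a b (f C0) = 0" using 1 2 3 by blast
  qed
  then show ?thesis using ann by blast
qed

end

theorem corollary3p3:
  fixes sc :: "'k::field \<Rightarrow> 'v::ab_group_add \<Rightarrow> 'v"
    and tp :: "'v \<Rightarrow> 'v \<Rightarrow> 'v \<Rightarrow> 'v"
    and H :: "'v L0 set"
  assumes "LTS sc tp"
    and "max_abelianL sc tp H"
    and "split_LTS sc tp H"
    and "symmetric_set (Lambda1 sc tp H)"
    and "symmetric_set (Lambda0 sc tp H)"
    and "Ann tp = {0}"
    and "module.span sc {tp a b c | a b c. True} = UNIV"
  shows "(\<forall>\<alpha>\<in>Lambda1 sc tp H.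
            is_ideal sc tp (Ipart sc tp H (conn_class sc tp H \<alpha>))
            \<and> T0part sc tp H (conn_class sc tp H \<alpha>) \<inter> Vpart sc tp H (conn_class sc tp H \<alpha>) = {0})
       \<and> is_direct_sum sc (conn_class sc tp H ` Lambda1 sc tp H) (Ipart sc tp H) UNIV"
proof -
  interpret L: LTSC sc tp H by unfold_locales (simp_all add: assms)
  have 1: "\<forall>\<alpha>\<in>Lambda1 sc tp H.
            is_ideal sc tp (Ipart sc tp H (conn_class sc tp H \<alpha>))
            \<and> T0part sc tp H (conn_class sc tp H \<alpha>) \<inter> Vpart sc tp H (conn_class sc tp H \<alpha>) = {0}"
    using L.ideal L.T0V by blast
  have 2: "is_direct_sum sc (conn_class sc tp H ` Lambda1 sc tp H) (Ipart sc tp H) UNIV"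
    unfolding is_direct_sum_def L.Ipart_eq
  proof (intro conjI allI impI ballI)
    fix C show "module.subspace sc (L.Ip C)" by simp
  next
    fix x show "x \<in> UNIV \<longleftrightarrow> (\<exists>F f. finite F \<and> F \<subseteq> conn_class sc tp H ` Lambda1 sc tp H \<and> (\<forall>i\<in>F. f i \<in> L.Ip i) \<and> x = (\<Sum>i\<in>F. f i))"
      using L.cover[OF assms(7), of x] unfolding L.SS_def by blast
  next
    fix F f i assume "finite F" "F \<subseteq> conn_class sc tp H ` Lambda1 sc tp H" "\<forall>i\<in>F. f i \<in> L.Ip i" "(\<Sum>i\<in>F. f i) = 0" "i \<in> F"
    then show "f i = 0" using L.indep[OF assms(7) assms(6)] by blast
  qed
  show ?thesis using 1 2 by blast
qed

end
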